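(* Let $k\le n$ be positive integers and use the neglex order. (i) Let $(\alpha,\mathbf i)\in A_{n,k}$ and $w\in\mathfrak S_n$ with $\mathrm{Des}(\alpha)\subseteq\mathrm{Des}(w)\subseteq\mathrm{Des}(\alpha\cup\mathbf i)$. Then the leading term of $\overline\pi_w(\mathbf x_{\alpha,\mathbf i})$ is $w(\mathbf x_{\alpha,\mathbf i})=gs_{w,\mathbf i'}\in\mathcal{GS}_{n,k}$, where $\mathbf i'=(i'_1,\dots,i'_n)$ is given by $$i'_j=i_j-|\{r\in\mathrm{Des}(w)\cap[n-k]: r\ge j\}|\quad(1\le j\le n).\qquad( * )$$ (ii) Let $gs_{w,\mathbf i'}\in\mathcal{GS}_{n,k}$. Then $gs_{w,\mathbf i'}$ is the leading term of $\overline\pi_w(\mathbf x_{\alpha,\mathbf i})$ with $(\alpha,\mathbf i)\in A_{n,k}$ and $\mathrm{Des}(\alpha)\subseteq\mathrm{Des}(w)\subseteq\mathrm{Des}(\alpha\cup\mathbf i)$ if and only if $\alpha$ is the composition with $\mathrm{Des}(\alpha)=\mathrm{Des}(w)\setminus[n-k]$ and $\mathbf i$ is related to $\mathbf i'$ by $( * )$; moreover for these $\alpha,\mathbf i$ one indeed has $(\alpha,\mathbf i)\in A_{n,k}$ and the stated property.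
   Context: $H_n(0)$ acts on $\mathbb F[x_1,\dots,x_n]$ by $\pi_i(f)=\frac{x_if-x_{i+1}s_i(f)}{x_i-x_{i+1}}$; $\overline\pi_i=\pi_i-1$; $\overline\pi_w$ is the product along a reduced word of $w$. Permutations act on polynomials by $x_i\mapsto x_{w(i)}$. Neglex: lexicographic order with $x_n>\cdots>x_1$. For $\alpha=(\alpha_1,\dots,\alpha_\ell)\models n$, $\mathrm{Des}(\alpha)=\{\alpha_1,\dots,\alpha_1+\cdots+\alpha_{\ell-1}\}$ and $\ell(\alpha)=\ell$; for an integer sequence $\mathbf i$, $\mathrm{Des}(\mathbf i)=\{j:i_j>i_{j+1}\}$; $\alpha\cup\mathbf i$ is the composition with $\mathrm{Des}(\alpha\cup\mathbf i)=\mathrm{Des}(\alpha)\cup\mathrm{Des}(\mathbf i)$; $\mathrm{Des}(w)=\{j:w(j)>w(j+1)\}$, $\mathrm{des}(w)=|\mathrm{Des}(w)|$. $\mathbf x_{\alpha,\mathbf i}=\big(\prod_{j\in\mathrm{Des}(\alpha)}x_1\cdots x_j\big)x_1^{i_1}\cdots x_n^{i_n}$; $gs_{w,\mathbf i}=w(\mathbf x_{\beta,\mathbf i})$ with $\mathrm{Des}(\beta)=\mathrm{Des}(w)$; $\mathcal{GS}_{n,k}=\{gs_{w,\mathbf i}: k-\mathrm{des}(w)>i_1\ge\cdots\ge i_{n-k}\ge0=i_{n-k+1}=\cdots=i_n\}$. $A_{n,k}$ is the set of pairs $(\alpha,\mathbf i)$ with $\alpha\models n$ whose first part satisfies $\alpha_1>n-k$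 and $\mathbf i=(i_1,\dots,i_n)$ integers with $k-\ell(\alpha)\ge i_1\ge\cdots\ge i_{n-k}\ge0=i_{n-k+1}=\cdots=i_n$. *)

theory Defs
  imports Main "HOL-Library.Poly_Mapping" "HOL-Combinatorics.Permutations"
begin

text \<open>Polynomials in the variables x_1, x_2, ... over a field: finitely supported
  maps from exponent vectors (monomials) to coefficients, with the convolution product.\<close>
type_synonym 'a mpoly = "(nat \<Rightarrow>\<^sub>0 nat) \<Rightarrow>\<^sub>0 'a"

definition X :: "nat \<Rightarrow> 'a::field mpoly" where
  "X i = Poly_Mapping.single (Poly_Mapping.single i 1) 1"

definition const :: "'a::field \<Rightarrow> 'a mpoly" where
  "const c = Poly_Mapping.single 0 c"

definition act :: "(nat \<Rightarrow> nat) \<Rightarrow> 'a::field mpoly \<Rightarrow> 'a mpoly" where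
  "act w p = (\<Sum>m\<in>Poly_Mapping.keys p.
      const (Poly_Mapping.lookup p m) * (\<Prod>j\<in>Poly_Mapping.keys m. X (w j) ^ Poly_Mapping.lookup m j))"

definition s :: "nat \<Rightarrow> nat \<Rightarrow> nat" where
  "s i = Transposition.transpose i (Suc i)"

definition pi_op :: "nat \<Rightarrow> 'a::field mpoly \<Rightarrow> 'a mpoly" where
  "pi_op i f = (THE g. (X i - X (Suc i)) * g = X i * f - X (Suc i) * act (s i) f)"

definition pibar_op :: "nat \<Rightarrow> 'a::field mpoly \<Rightarrow> 'a mpoly" where
  "pibar_op i f = pi_op i f - f"

definition inv_count :: "nat \<Rightarrow> (nat \<Rightarrow> nat) \<Rightarrow> nat" where
  "inv_count n w = card {(i, j). 1 \<le> i \<and> i < j \<and> j \<le> n \<and> w i > w j}"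

definition word_perm :: "nat list \<Rightarrow> nat \<Rightarrow> nat" where
  "word_perm ws = foldr (\<lambda>i acc. s i \<circ> acc) ws id"

definition reduced_word :: "nat \<Rightarrow> (nat \<Rightarrow> nat) \<Rightarrow> nat list \<Rightarrow> bool" where
  "reduced_word n w ws \<longleftrightarrow> (\<forall>i\<in>set ws. 1 \<le> i \<and> i < n) \<and> word_perm ws = w
      \<and> length ws = inv_count n w"

definition pibar_w :: "nat \<Rightarrow> (nat \<Rightarrow> nat) \<Rightarrow> 'a::field mpoly \<Rightarrow> 'a mpoly" where
  "pibar_w n w = foldr (\<lambda>i g. pibar_op i \<circ> g) (SOME ws. reduced_word n w ws) id"

text \<open>Neglex order on monomials: lexicographic with x_n > ... > x_1, i.e. compare
  exponents of the variable of largest index first.\<close>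
definition neglex_less :: "(nat \<Rightarrow>\<^sub>0 nat) \<Rightarrow> (nat \<Rightarrow>\<^sub>0 nat) \<Rightarrow> bool" where
  "neglex_less a b \<longleftrightarrow> (\<exists>j. Poly_Mapping.lookup a j < Poly_Mapping.lookup b j \<and>
      (\<forall>l>j. Poly_Mapping.lookup a l = Poly_Mapping.lookup b l))"

definition lead_monom :: "'a::field mpoly \<Rightarrow> (nat \<Rightarrow>\<^sub>0 nat)" where
  "lead_monom p = (THE m. m \<in> Poly_Mapping.keys p \<and>
      (\<forall>m'\<in>Poly_Mapping.keys p. m' \<noteq> m \<longrightarrow> neglex_less m' m))"

definition lead_term :: "'a::field mpoly \<Rightarrow> 'a mpoly" where
  "lead_term p = Poly_Mapping.single (lead_monom p) (Poly_Mapping.lookup p (lead_monom p))"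

definition is_comp :: "nat \<Rightarrow> nat list \<Rightarrow> bool" where
  "is_comp n \<alpha> \<longleftrightarrow> (\<forall>a\<in>set \<alpha>. 0 < a) \<and> sum_list \<alpha> = n"

definition Des_comp :: "nat list \<Rightarrow> nat set" where
  "Des_comp \<alpha> = {sum_list (take j \<alpha>) | j. 1 \<le> j \<and> j < length \<alpha>}"

text \<open>Integer sequences (i_1,...,i_n) are functions nat => int, read on {1..n}.\<close>
definition Des_seq :: "nat \<Rightarrow> (nat \<Rightarrow> int) \<Rightarrow> nat set" where
  "Des_seq n i = {j. 1 \<le> j \<and> j < n \<and> i j > i (Suc j)}"

definition Des_perm :: "nat \<Rightarrow> (nat \<Rightarrow> nat) \<Rightarrow> nat set" where
  "Des_perm n w = {j. 1 \<le> j \<and> j < n \<and> w j > w (Suc j)}"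

definition des_perm :: "nat \<Rightarrow> (nat \<Rightarrow> nat) \<Rightarrow> nat" where
  "des_perm n w = card (Des_perm n w)"

definition xD :: "nat \<Rightarrow> nat set \<Rightarrow> (nat \<Rightarrow> int) \<Rightarrow> 'a::field mpoly" where
  "xD n D i = (\<Prod>j\<in>D. \<Prod>m\<in>{1..j}. X m) * (\<Prod>m\<in>{1..n}. X m ^ nat (i m))"

definition x_alpha :: "nat \<Rightarrow> nat list \<Rightarrow> (nat \<Rightarrow> int) \<Rightarrow> 'a::field mpoly" where
  "x_alpha n \<alpha> i = xD n (Des_comp \<alpha>) i"

text \<open>gs_{w,i} = w(x_{beta,i}) with Des(beta) = Des(w).\<close>
definition gs :: "nat \<Rightarrow> (nat \<Rightarrow> nat) \<Rightarrow> (nat \<Rightarrow> int) \<Rightarrow> 'a::field mpoly" where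
  "gs n w i = act w (xD n (Des_perm n w) i)"

definition GS_index :: "nat \<Rightarrow> nat \<Rightarrow> (nat \<Rightarrow> nat) \<Rightarrow> (nat \<Rightarrow> int) \<Rightarrow> bool" where
  "GS_index n k w i \<longleftrightarrow> w permutes {1..n} \<and>
     i 1 < int k - int (des_perm n w) \<and>
     (\<forall>j. 1 \<le> j \<and> j < n - k \<longrightarrow> i (Suc j) \<le> i j) \<and>
     (\<forall>j. 1 \<le> j \<and> j \<le> n \<longrightarrow> 0 \<le> i j) \<and>
     (\<forall>j. n - k < j \<and> j \<le> n \<longrightarrow> i j = 0)"

definition GS :: "nat \<Rightarrow> nat \<Rightarrow> 'a::field mpoly set" where
  "GS n k = {gs n w i | w i. GS_index n k w i}"

definition in_A :: "nat \<Rightarrow> nat \<Rightarrow> nat list \<Rightarrow> (nat \<Rightarrow> int) \<Rightarrow> bool" where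
  "in_A n k \<alpha> i \<longleftrightarrow> is_comp n \<alpha> \<and> hd \<alpha> > n - k \<and>
     i 1 \<le> int k - int (length \<alpha>) \<and>
     (\<forall>j. 1 \<le> j \<and> j < n - k \<longrightarrow> i (Suc j) \<le> i j) \<and>
     (\<forall>j. 1 \<le> j \<and> j \<le> n \<longrightarrow> 0 \<le> i j) \<and>
     (\<forall>j. n - k < j \<and> j \<le> n \<longrightarrow> i j = 0)"

definition shift_count :: "nat \<Rightarrow> nat \<Rightarrow> (nat \<Rightarrow> nat) \<Rightarrow> nat \<Rightarrow> int" where
  "shift_count n k w j = int (card {r \<in> Des_perm n w \<inter> {1..n-k}. j \<le> r})"

end

theory Submission
  imports Defs
begin

abbreviation mon :: "(nat \<Rightarrow>\<^sub>0 nat) \<Rightarrow> 'a::field mpoly" where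
  "mon e \<equiv> Poly_Mapping.single e 1"

lemma X_pow: "(X i :: 'a::field mpoly) ^ k = Poly_Mapping.single (Poly_Mapping.single i k) 1"
proof (induction k)
  case 0 then show ?case by simp
next
  case (Suc k)
  have "Poly_Mapping.single i 1 + Poly_Mapping.single i k = Poly_Mapping.single i (Suc k)"
    by (simp add: single_add[symmetric])
  then show ?case using Suc by (simp add: X_def mult_single)
qed

lemma prod_single: "(\<Prod>x\<in>A. Poly_Mapping.single (f x) (1::'a::field)) = Poly_Mapping.single (\<Sum>x\<in>A. f x) 1"
proof (induction A rule: infinite_finite_induct)
  case (insert x F) then show ?case by (simp add: mult_single)
qed auto

definition push :: "(nat \<Rightarrow> nat) \<Rightarrow> (nat \<Rightarrow>\<^sub>0 nat) \<Rightarrow> (nat \<Rightarrow>\<^sub>0 nat)" where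
  "push w m = (\<Sum>j\<in>Poly_Mapping.keys m. Poly_Mapping.single (w j) (Poly_Mapping.lookup m j))"

lemma prod_X_push: "(\<Prod>j\<in>Poly_Mapping.keys m. (X (w j)::'a::field mpoly) ^ Poly_Mapping.lookup m j) = mon (push w m)"
  by (simp add: X_pow prod_single push_def)

lemma act_eq: "act w (p::'a::field mpoly) = (\<Sum>m\<in>Poly_Mapping.keys p. Poly_Mapping.single (push w m) (Poly_Mapping.lookup p m))"
  by (simp add: act_def prod_X_push const_def mult_single)

lemma act_mon: "act w (mon e :: 'a::field mpoly) = mon (push w e)"
  by (simp add: act_eq)

lemma lookup_push_bij: assumes "bij w" shows "Poly_Mapping.lookup (push w m) k = Poly_Mapping.lookup m (inv w k)"
proof -
  have "Poly_Mapping.lookup (push w m) k = (\<Sum>j\<in>Poly_Mapping.keys m. if j = inv w k then Poly_Mapping.lookup m j else 0)"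
    unfolding push_def lookup_sum lookup_single
    by (intro sum.cong refl) (use assms in \<open>auto simp: when_def bij_inv_eq_iff\<close>)
  also have "\<dots> = Poly_Mapping.lookup m (inv w k)"
    by (simp add: in_keys_iff)
  finally show ?thesis .
qed

lemma poly_expand: "(p::'a::field mpoly) = (\<Sum>e\<in>Poly_Mapping.keys p. Poly_Mapping.single e (Poly_Mapping.lookup p e))"
proof (rule poly_mapping_eqI)
  fix k
  show "Poly_Mapping.lookup p k = Poly_Mapping.lookup (\<Sum>e\<in>Poly_Mapping.keys p. Poly_Mapping.single e (Poly_Mapping.lookup p e)) k"
    unfolding lookup_sum lookup_single by (simp add: when_def in_keys_iff)
qed

lemma keys_sum_sub: "Poly_Mapping.keys (sum (b::_ \<Rightarrow> 'a::field mpoly) I) \<subseteq> (\<Union>i\<in>I. Poly_Mapping.keys (b i))"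
  by (rule keys_sum)


definition zer :: "nat \<Rightarrow> (nat \<Rightarrow>\<^sub>0 nat) \<Rightarrow> (nat \<Rightarrow>\<^sub>0 nat)" where
  "zer i e = Poly_Mapping.update i 0 (Poly_Mapping.update (Suc i) 0 e)"

definition ME :: "nat \<Rightarrow> (nat \<Rightarrow>\<^sub>0 nat) \<Rightarrow> nat \<Rightarrow> nat \<Rightarrow> (nat \<Rightarrow>\<^sub>0 nat)" where
  "ME i r t u = r + Poly_Mapping.single i t + Poly_Mapping.single (Suc i) u"

lemma lookup_ME: "Poly_Mapping.lookup (ME i r t u) m =
   Poly_Mapping.lookup r m + (if m = i then t else 0) + (if m = Suc i then u else 0)"
  by (auto simp: ME_def lookup_add lookup_single when_def)

lemma lookup_zer: "Poly_Mapping.lookup (zer i e) m = (if m = i \<or> m = Suc i then 0 else Poly_Mapping.lookup e m)"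
  by (auto simp: zer_def lookup_update)

lemma e_decomp: "e = ME i (zer i e) (Poly_Mapping.lookup e i) (Poly_Mapping.lookup e (Suc i))"
  by (rule poly_mapping_eqI) (auto simp: lookup_ME lookup_zer)

lemma s_simps: "s i i = Suc i" "s i (Suc i) = i" "m \<noteq> i \<Longrightarrow> m \<noteq> Suc i \<Longrightarrow> s i m = m"
  by (auto simp: s_def transpose_def)

lemma bij_s: "bij (s i)" by (simp add: s_def)
lemma inv_s: "inv (s i) = s i" by (simp add: s_def inv_transpose_eq)

lemma push_s: "push (s i) e = ME i (zer i e) (Poly_Mapping.lookup e (Suc i)) (Poly_Mapping.lookup e i)"
  by (rule poly_mapping_eqI) (auto simp: lookup_push_bij[OF bij_s] inv_s lookup_ME lookup_zer s_simps)

lemma X_mult_ME: "(X i :: 'a::field mpoly) * mon (ME i r t u) = mon (ME i r (Suc t) u)"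
  "(X (Suc i) :: 'a::field mpoly) * mon (ME i r t u) = mon (ME i r t (Suc u))"
proof -
  have "Poly_Mapping.single i 1 + ME i r t u = ME i r (Suc t) u"
    by (rule poly_mapping_eqI) (auto simp: lookup_ME lookup_add lookup_single when_def)
  then show "(X i :: 'a::field mpoly) * mon (ME i r t u) = mon (ME i r (Suc t) u)"
    by (simp add: X_def mult_single)
  have "Poly_Mapping.single (Suc i) 1 + ME i r t u = ME i r t (Suc u)"
    by (rule poly_mapping_eqI) (auto simp: lookup_ME lookup_add lookup_single when_def)
  then show "(X (Suc i) :: 'a::field mpoly) * mon (ME i r t u) = mon (ME i r t (Suc u))"
    by (simp add: X_def mult_single)
qed

definition pimE :: "nat \<Rightarrow> nat \<Rightarrow> nat \<Rightarrow> (nat \<Rightarrow>\<^sub>0 nat) \<Rightarrow> 'a::field mpoly" where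
  "pimE i p q r = (if q \<le> p then (\<Sum>t\<in>{q..p}. mon (ME i r t (p + q - t)))
      else - (\<Sum>t\<in>{Suc p..<q}. mon (ME i r t (p + q - t))))"

lemma pimE_eq:
  "((X i - X (Suc i)) :: 'a::field mpoly) * pimE i p q r = X i * mon (ME i r p q) - X (Suc i) * mon (ME i r q p)"
proof -
  define S where "S = p + q"
  define h where "h t = (mon (ME i r t (S + 1 - t)) :: 'a mpoly)" for t
  have step: "((X i - X (Suc i)) :: 'a::field mpoly) * mon (ME i r t (S - t)) = h (Suc t) - h t" if "t \<le> S" for t
  proof -
    have "((X i - X (Suc i)) :: 'a::field mpoly) * mon (ME i r t (S - t)) = X i * mon (ME i r t (S - t)) - X (Suc i) * mon (ME i r t (S - t))"
      by (rule left_diff_distrib)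
    also have "\<dots> = mon (ME i r (Suc t) (S - t)) - mon (ME i r t (Suc (S - t)))"
      by (simp only: X_mult_ME)
    also have "\<dots> = h (Suc t) - h t"
    proof -
      have 1: "S - t = S + 1 - Suc t" by simp
      have 2: "Suc (S - t) = S + 1 - t" using that by simp
      show ?thesis unfolding h_def 1[symmetric] 2[symmetric] ..
    qed
    finally show ?thesis .
  qed
  show ?thesis
  proof (cases "q \<le> p")
    case True
    have "((X i - X (Suc i)) :: 'a::field mpoly) * pimE i p q r = (\<Sum>t=q..p. h (Suc t) - h t)"
      unfolding pimE_def using True
      by (simp add: sum_distrib_left S_def[symmetric]) (rule sum.cong[OF refl], rule step, simp add: S_def)
    also have "\<dots> = h (Suc p) - h q" using True by (intro sum_Suc_diff) simp
    also have "\<dots> = X i * mon (ME i r p q) - X (Suc i) * mon (ME i r q p)"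
      by (simp add: h_def S_def X_mult_ME Suc_diff_le)
    finally show ?thesis .
  next
    case False
    have eq: "{Suc p..<q} = {Suc p..q - 1}" using False by auto
    have "((X i - X (Suc i)) :: 'a::field mpoly) * pimE i p q r = - (\<Sum>t=Suc p..q-1. h (Suc t) - h t)"
      unfolding pimE_def using False
      by (simp add: sum_distrib_left eq S_def[symmetric]) (rule sum.cong[OF refl], rule step, auto simp add: S_def)
    also have "(\<Sum>t=Suc p..q-1. h (Suc t) - h t) = h (Suc (q-1)) - h (Suc p)" using False by (intro sum_Suc_diff) auto
    also have "- (h (Suc (q-1)) - h (Suc p)) = X i * mon (ME i r p q) - X (Suc i) * mon (ME i r q p)"
      using False by (simp add: h_def S_def X_mult_ME Suc_diff_le)
    finally show ?thesis .
  qed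
qed


definition pim :: "nat \<Rightarrow> (nat \<Rightarrow>\<^sub>0 nat) \<Rightarrow> 'a::field mpoly" where
  "pim i e = pimE i (Poly_Mapping.lookup e i) (Poly_Mapping.lookup e (Suc i)) (zer i e)"

lemma pim_eq: "((X i - X (Suc i)) :: 'a::field mpoly) * pim i e = X i * mon e - X (Suc i) * mon (push (s i) e)"
  unfolding pim_def push_s by (subst (2) e_decomp[of e i]) (rule pimE_eq)

definition PI :: "nat \<Rightarrow> 'a::field mpoly \<Rightarrow> 'a mpoly" where
  "PI i f = (\<Sum>e\<in>Poly_Mapping.keys f. const (Poly_Mapping.lookup f e) * pim i e)"

lemma const_mon: "const c * mon e = Poly_Mapping.single e c"
  by (simp add: const_def mult_single)

lemma PI_eq: "((X i - X (Suc i)) :: 'a::field mpoly) * PI i f = X i * f - X (Suc i) * act (s i) f"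
proof -
  have "((X i - X (Suc i)) :: 'a::field mpoly) * PI i f =
     (\<Sum>e\<in>Poly_Mapping.keys f. const (Poly_Mapping.lookup f e) * (X i * mon e - X (Suc i) * mon (push (s i) e)))"
    unfolding PI_def sum_distrib_left by (intro sum.cong refl) (simp add: pim_eq[symmetric] algebra_simps)
  also have "\<dots> = X i * (\<Sum>e\<in>Poly_Mapping.keys f. const (Poly_Mapping.lookup f e) * mon e)
      - X (Suc i) * (\<Sum>e\<in>Poly_Mapping.keys f. const (Poly_Mapping.lookup f e) * mon (push (s i) e))"
    by (simp add: sum_distrib_left sum_subtractf algebra_simps)
  also have "(\<Sum>e\<in>Poly_Mapping.keys f. const (Poly_Mapping.lookup f e) * mon e) = f"
    by (simp add: const_mon poly_expand[symmetric])
  also have "(\<Sum>e\<in>Poly_Mapping.keys f. const (Poly_Mapping.lookup f e) * mon (push (s i) e)) = act (s i) f"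
    by (simp add: const_mon act_eq)
  finally show ?thesis .
qed

lemma X_diff_nz: "((X i - X (Suc i)) :: 'a::field mpoly) \<noteq> 0"
proof
  assume "((X i - X (Suc i)) :: 'a::field mpoly) = 0"
  then have "(X i :: 'a mpoly) = X (Suc i)" by simp
  then have "Poly_Mapping.lookup (X i :: 'a mpoly) (Poly_Mapping.single i 1) = Poly_Mapping.lookup (X (Suc i) :: 'a mpoly) (Poly_Mapping.single i 1)"
    by simp
  moreover have "Poly_Mapping.single i (1::nat) \<noteq> Poly_Mapping.single (Suc i) 1"
  proof
    assume "Poly_Mapping.single i (1::nat) = Poly_Mapping.single (Suc i) 1"
    then have "Poly_Mapping.lookup (Poly_Mapping.single i (1::nat)) i = Poly_Mapping.lookup (Poly_Mapping.single (Suc i) 1) i" by simp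
    then show False by (simp add: lookup_single)
  qed
  ultimately show False by (simp add: X_def lookup_single)
qed

lemma pi_op_eq: "pi_op i f = PI i (f :: 'a::field mpoly)"
  unfolding pi_op_def
proof (rule the_equality)
  show "(X i - X (Suc i)) * PI i f = X i * f - X (Suc i) * act (s i) f" by (rule PI_eq)
next
  fix g :: "'a mpoly"
  assume "(X i - X (Suc i)) * g = X i * f - X (Suc i) * act (s i) f"
  then have "(X i - X (Suc i)) * g = (X i - X (Suc i)) * PI i f" by (simp add: PI_eq)
  then show "g = PI i f" using X_diff_nz[of i, where 'a='a] mult_left_cancel by blast
qed

definition pbm :: "nat \<Rightarrow> (nat \<Rightarrow>\<^sub>0 nat) \<Rightarrow> 'a::field mpoly" where
  "pbm i e = pim i e - mon e"

lemma pibar_eq: "pibar_op i f = (\<Sum>e\<in>Poly_Mapping.keys f. const (Poly_Mapping.lookup f e) * pbm i (e::nat \<Rightarrow>\<^sub>0 nat)) "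
proof -
  have "(\<Sum>e\<in>Poly_Mapping.keys f. const (Poly_Mapping.lookup f e) * mon e) = (f::'a mpoly)"
    by (simp add: const_mon poly_expand[symmetric])
  then show ?thesis
    unfolding pibar_op_def pi_op_eq PI_def pbm_def
    by (simp add: algebra_simps sum_subtractf)
qed


abbreviation L :: "(nat \<Rightarrow>\<^sub>0 nat) \<Rightarrow> nat \<Rightarrow> nat" where "L \<equiv> Poly_Mapping.lookup"

definition seg :: "nat \<Rightarrow> (nat \<Rightarrow>\<^sub>0 nat) \<Rightarrow> (nat \<Rightarrow>\<^sub>0 nat) \<Rightarrow> bool" where
  "seg i e d \<longleftrightarrow> (\<forall>m. m \<noteq> i \<longrightarrow> m \<noteq> Suc i \<longrightarrow> L d m = L e m) \<and>
     L d i + L d (Suc i) = L e i + L e (Suc i) \<and>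
     min (L e i) (L e (Suc i)) \<le> L d (Suc i) \<and> L d (Suc i) \<le> max (L e i) (L e (Suc i))"

lemma keys_diff_sub: "Poly_Mapping.keys ((a::'a::field mpoly) - b) \<subseteq> Poly_Mapping.keys a \<union> Poly_Mapping.keys b"
  by (auto simp: in_keys_iff lookup_minus)

lemma keys_pimE: "Poly_Mapping.keys (pimE i p q r :: 'a::field mpoly) \<subseteq>
   {ME i r t (p + q - t) | t. (q \<le> p \<and> q \<le> t \<and> t \<le> p) \<or> (p < q \<and> p < t \<and> t < q)}"
proof (rule subsetI)
  fix x assume x: "x \<in> Poly_Mapping.keys (pimE i p q r :: 'a::field mpoly)"
  show "x \<in> {ME i r t (p + q - t) | t. (q \<le> p \<and> q \<le> t \<and> t \<le> p) \<or> (p < q \<and> p < t \<and> t < q)}"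
  proof (cases "q \<le> p")
    case True
    have "x \<in> Poly_Mapping.keys (\<Sum>t\<in>{q..p}. mon (ME i r t (p + q - t)) :: 'a mpoly)"
      using x True by (simp add: pimE_def)
    then have "x \<in> (\<Union>t\<in>{q..p}. Poly_Mapping.keys (mon (ME i r t (p + q - t)) :: 'a mpoly))"
      by (rule subsetD[OF keys_sum_sub])
    then obtain t where "t \<in> {q..p}" "x = ME i r t (p + q - t)" by auto
    then show ?thesis using True by auto
  next
    case False
    have "x \<in> Poly_Mapping.keys (\<Sum>t\<in>{Suc p..<q}. mon (ME i r t (p + q - t)) :: 'a mpoly)"
      using x False by (simp add: pimE_def keys_minus)
    then have "x \<in> (\<Union>t\<in>{Suc p..<q}. Poly_Mapping.keys (mon (ME i r t (p + q - t)) :: 'a mpoly))"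
      by (rule subsetD[OF keys_sum_sub])
    then obtain t where "t \<in> {Suc p..<q}" "x = ME i r t (p + q - t)" by auto
    then show ?thesis using False by auto
  qed
qed

lemma keys_pbm: assumes "d \<in> Poly_Mapping.keys (pbm i e :: 'a::field mpoly)" shows "seg i e d"
proof -
  let ?p = "L e i" and ?q = "L e (Suc i)" and ?r = "zer i e"
  have "d \<in> Poly_Mapping.keys (pim i e :: 'a mpoly) \<or> d = e"
    using assms keys_diff_sub[of "pim i e :: 'a mpoly" "mon e"] unfolding pbm_def by auto
  then show ?thesis
  proof
    assume "d \<in> Poly_Mapping.keys (pim i e :: 'a mpoly)"
    then obtain t where d: "d = ME i ?r t (?p + ?q - t)"
      and t: "(?q \<le> ?p \<and> ?q \<le> t \<and> t \<le> ?p) \<or> (?p < ?q \<and> ?p < t \<and> t < ?q)"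
      using keys_pimE[of i ?p ?q ?r, where 'a='a] unfolding pim_def by blast
    show ?thesis unfolding seg_def d using t by (auto simp: lookup_ME lookup_zer)
  next
    assume "d = e" then show ?thesis by (auto simp: seg_def)
  qed
qed

lemma ME_inj: "ME i r t u = ME i r t' u' \<Longrightarrow> t = t' \<and> u = u'"
proof -
  assume h: "ME i r t u = ME i r t' u'"
  have "L (ME i r t u) i = L (ME i r t' u') i" "L (ME i r t u) (Suc i) = L (ME i r t' u') (Suc i)"
    using h by simp_all
  then show ?thesis by (simp add: lookup_ME)
qed

lemma coeff_pbm: assumes "L e (Suc i) < L e i"
  shows "Poly_Mapping.lookup (pbm i e :: 'a::field mpoly) (push (s i) e) = 1"
proof -
  let ?p = "L e i" and ?q = "L e (Suc i)" and ?r = "zer i e"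
  have ps: "push (s i) e = ME i ?r ?q ?p" by (rule push_s)
  have ed: "e = ME i ?r ?p ?q" by (rule e_decomp)
  have "Poly_Mapping.lookup (pim i e :: 'a mpoly) (ME i ?r ?q ?p) = (\<Sum>t\<in>{?q..?p}. if ME i ?r t (?p + ?q - t) = ME i ?r ?q ?p then (1::'a) else 0)"
    unfolding pim_def pimE_def using assms by (simp add: lookup_sum lookup_single when_def)
  also have "\<dots> = (\<Sum>t\<in>{?q..?p}. if t = ?q then 1 else 0)"
    by (rule sum.cong[OF refl]) (use ME_inj in fastforce)
  also have "\<dots> = 1" using assms by simp
  finally have 1: "Poly_Mapping.lookup (pim i e :: 'a mpoly) (ME i ?r ?q ?p) = 1" .
  have "e \<noteq> ME i ?r ?q ?p" using assms ed ME_inj by (metis less_irrefl)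
  then have 2: "Poly_Mapping.lookup (mon e :: 'a mpoly) (ME i ?r ?q ?p) = 0"
    by (simp add: lookup_single when_def)
  show ?thesis unfolding pbm_def ps using 1 2 by (simp add: lookup_minus)
qed


definition cnt :: "nat \<Rightarrow> (nat \<Rightarrow> nat) \<Rightarrow> nat \<Rightarrow> nat \<Rightarrow> nat" where
  "cnt n x j h = card {m\<in>{j..n}. h \<le> x m}"

definition lelv :: "nat \<Rightarrow> (nat \<Rightarrow> nat) \<Rightarrow> (nat \<Rightarrow> nat) \<Rightarrow> bool" where
  "lelv n x y \<longleftrightarrow> (\<forall>j h. cnt n x j h \<le> cnt n y j h)"

definition Ssum :: "nat \<Rightarrow> (nat \<Rightarrow> nat) \<Rightarrow> nat \<Rightarrow> nat" where
  "Ssum n x j = (\<Sum>m\<in>{j..n}. x m)"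

lemma cnt_rec: "j \<le> n \<Longrightarrow> cnt n x j h = (if h \<le> x j then 1 else 0) + cnt n x (Suc j) h"
proof -
  assume j: "j \<le> n"
  have e: "{j..n} = insert j {Suc j..n}" using j by auto
  have "{m\<in>{j..n}. h \<le> x m} = (if h \<le> x j then insert j {m\<in>{Suc j..n}. h \<le> x m} else {m\<in>{Suc j..n}. h \<le> x m})"
    unfolding e by auto
  then show ?thesis unfolding cnt_def by (simp add: card_insert_if)
qed

lemma Ssum_rec: "j \<le> n \<Longrightarrow> Ssum n x j = x j + Ssum n x (Suc j)"
  unfolding Ssum_def by (simp add: sum.atLeast_Suc_atMost)

lemma cnt_sw_low: assumes "1 \<le> i" "i < n" "j \<le> i" shows "cnt n (x \<circ> s i) j h = cnt n x j h"
proof -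
  have perm: "s i permutes {j..n}" unfolding s_def using assms by (intro permutes_swap_id) auto
  have "{m\<in>{j..n}. h \<le> (x \<circ> s i) m} = s i ` {m\<in>{j..n}. h \<le> x m}"
  proof -
    have inv: "s i (s i m) = m" for m by (simp add: s_def)
    show ?thesis
    proof (intro set_eqI iffI)
      fix m assume "m \<in> {m\<in>{j..n}. h \<le> (x \<circ> s i) m}"
      then show "m \<in> s i ` {m\<in>{j..n}. h \<le> x m}"
        using permutes_in_image[OF perm] inv by (auto intro!: image_eqI[of _ _ "s i m"])
    next
      fix m assume "m \<in> s i ` {m\<in>{j..n}. h \<le> x m}"
      then show "m \<in> {m\<in>{j..n}. h \<le> (x \<circ> s i) m}"
        using permutes_in_image[OF perm] inv by auto
    qed
  qed
  moreover have "inj (s i)" by (simp add: s_def)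
  ultimately show ?thesis unfolding cnt_def by (simp add: card_image inj_on_subset)
qed

lemma cnt_sw_high: assumes "Suc i < j" shows "cnt n (x \<circ> s i) j h = cnt n x j h"
proof -
  have "{m\<in>{j..n}. h \<le> (x \<circ> s i) m} = {m\<in>{j..n}. h \<le> x m}"
    using assms by (auto simp: s_simps)
  then show ?thesis unfolding cnt_def by simp
qed

lemma cnt_sw_mid: assumes "1 \<le> i" "i < n"
  shows "cnt n (x \<circ> s i) (Suc i) h = (if h \<le> x i then 1 else 0) + cnt n x (Suc (Suc i)) h"
  using assms cnt_rec[of "Suc i" n "x \<circ> s i" h] cnt_sw_high[of i "Suc (Suc i)" n x h]
  by (simp add: s_simps)

lemma cnt_cases: "j \<le> i \<or> j = Suc i \<or> Suc i < j" by auto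

lemma lelv_refl: "lelv n x x" by (simp add: lelv_def)
lemma lelv_trans: "lelv n x y \<Longrightarrow> lelv n y z \<Longrightarrow> lelv n x z"
  unfolding lelv_def by (meson le_trans)

lemma lelv_up: assumes "1 \<le> i" "i < n" "y (Suc i) < y i" shows "lelv n y (y \<circ> s i)"
  unfolding lelv_def
proof (intro allI)
  fix j h
  consider "j \<le> i" | "j = Suc i" | "Suc i < j" by linarith
  then show "cnt n y j h \<le> cnt n (y \<circ> s i) j h"
  proof cases
    case 1 then show ?thesis using cnt_sw_low assms by simp
  next
    case 2 then show ?thesis using cnt_sw_mid[OF assms(1,2)] cnt_rec[of "Suc i" n y h] assms by auto
  next
    case 3 then show ?thesis using cnt_sw_high by simp
  qed
qed

lemma lelv_sw: assumes "1 \<le> i" "i < n" "y (Suc i) < y i" "lelv n x y"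
  shows "lelv n (x \<circ> s i) (y \<circ> s i)"
  unfolding lelv_def
proof (intro allI)
  fix j h
  have le: "cnt n x j' h' \<le> cnt n y j' h'" for j' h' using assms(4) by (simp add: lelv_def)
  consider "j \<le> i" | "j = Suc i" | "Suc i < j" by linarith
  then show "cnt n (x \<circ> s i) j h \<le> cnt n (y \<circ> s i) j h"
  proof cases
    case 1 then show ?thesis using cnt_sw_low assms le by simp
  next
    case 2
    have A: "cnt n x (Suc (Suc i)) h \<le> cnt n y (Suc (Suc i)) h" by (rule le)
    have B: "cnt n x i h \<le> cnt n y i h" by (rule le)
    have ri: "cnt n x i h = (if h \<le> x i then 1 else 0) + ((if h \<le> x (Suc i) then 1 else 0) + cnt n x (Suc (Suc i)) h)"
      using cnt_rec[of i n x h] cnt_rec[of "Suc i" n x h] assms by simp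
    have ri': "cnt n y i h = (if h \<le> y i then 1 else 0) + ((if h \<le> y (Suc i) then 1 else 0) + cnt n y (Suc (Suc i)) h)"
      using cnt_rec[of i n y h] cnt_rec[of "Suc i" n y h] assms by simp
    have mx: "cnt n (x \<circ> s i) (Suc i) h = (if h \<le> x i then 1 else 0) + cnt n x (Suc (Suc i)) h"
      by (rule cnt_sw_mid[OF assms(1,2)])
    have my: "cnt n (y \<circ> s i) (Suc i) h = (if h \<le> y i then 1 else 0) + cnt n y (Suc (Suc i)) h"
      by (rule cnt_sw_mid[OF assms(1,2)])
    show ?thesis
    proof (cases "h \<le> y i")
      case True
      then show ?thesis unfolding 2 mx my using A by simp
    next
      case False
      then have "\<not> h \<le> y (Suc i)" using assms(3) by simp
      then have "cnt n y i h = cnt n y (Suc (Suc i)) h" using ri' False by simp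
      then have "(if h \<le> x i then 1 else 0) + cnt n x (Suc (Suc i)) h \<le> cnt n y (Suc (Suc i)) h"
        using B ri by (simp split: if_splits)
      then show ?thesis unfolding 2 mx my using False by simp
    qed
  next
    case 3 then show ?thesis using cnt_sw_high le by simp
  qed
qed

lemma card_filter_sum: "finite A \<Longrightarrow> card {h\<in>A. P h} = (\<Sum>h\<in>A. if P h then 1 else 0)"
proof -
  assume f: "finite A"
  have "card {h\<in>A. P h} = (\<Sum>h\<in>{h\<in>A. P h}. 1)" by (rule card_eq_sum)
  also have "\<dots> = (\<Sum>h\<in>A. if P h then 1 else 0)" using f by (rule sum.inter_filter)
  finally show ?thesis .
qed

lemma card_le_val: "(x::nat) \<le> H \<Longrightarrow> x = (\<Sum>h\<in>{1..H}. if h \<le> x then 1 else 0)"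
proof -
  assume "x \<le> H"
  then have "{h\<in>{1..H}. h \<le> x} = {1..x}" by auto
  then have "card {h\<in>{1..H}. h \<le> x} = x" by simp
  moreover have "card {h\<in>{1..H}. h \<le> x} = (\<Sum>h\<in>{1..H}. if h \<le> x then 1 else 0)"
    by (rule card_filter_sum) simp
  ultimately show ?thesis by simp
qed

lemma Ssum_cnt: assumes "\<forall>m. x m \<le> H" shows "Ssum n x j = (\<Sum>h\<in>{1..H}. cnt n x j h)"
proof -
  have "Ssum n x j = (\<Sum>m\<in>{j..n}. \<Sum>h\<in>{1..H}. if h \<le> x m then 1 else 0)"
    unfolding Ssum_def by (rule sum.cong[OF refl], rule card_le_val) (use assms in auto)
  also have "\<dots> = (\<Sum>h\<in>{1..H}. \<Sum>m\<in>{j..n}. if h \<le> x m then 1 else 0)" by (rule sum.swap)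
  also have "\<dots> = (\<Sum>h\<in>{1..H}. cnt n x j h)"
    unfolding cnt_def by (rule sum.cong[OF refl], rule card_filter_sum[symmetric]) simp
  finally show ?thesis .
qed

lemma lelv_Ssum: assumes "lelv n x y" "\<forall>m. x m \<le> H" "\<forall>m. y m \<le> H"
  shows "Ssum n x j \<le> Ssum n y j"
  using assms unfolding Ssum_cnt[OF assms(2)] Ssum_cnt[OF assms(3)] lelv_def
  by (intro sum_mono) auto


definition dot :: "nat \<Rightarrow> (nat \<Rightarrow> int) \<Rightarrow> (nat \<Rightarrow> nat) \<Rightarrow> int" where
  "dot n \<phi> x = (\<Sum>m\<in>{1..n}. \<phi> m * int (x m))"

definition hull :: "nat \<Rightarrow> (nat \<Rightarrow> nat) set \<Rightarrow> (nat \<Rightarrow> nat) \<Rightarrow> bool" where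
  "hull n V c \<longleftrightarrow> (\<forall>\<phi>. \<exists>x\<in>V. dot n \<phi> c \<le> dot n \<phi> x)"

definition supp :: "nat \<Rightarrow> (nat \<Rightarrow> nat) \<Rightarrow> bool" where
  "supp n x \<longleftrightarrow> (\<forall>m. m < 1 \<or> n < m \<longrightarrow> x m = 0)"

lemma s_permutes: "1 \<le> i \<Longrightarrow> i < n \<Longrightarrow> s i permutes {1..n}"
  unfolding s_def by (intro permutes_swap_id) auto

lemma s_s: "s i (s i m) = m" by (simp add: s_def)

lemma dot_sw: assumes "1 \<le> i" "i < n" shows "dot n \<phi> (x \<circ> s i) = dot n (\<phi> \<circ> s i) x"
proof -
  have "dot n (\<phi> \<circ> s i) x = (\<Sum>m\<in>{1..n}. \<phi> (s i m) * int (x m))" by (simp add: dot_def)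
  also have "\<dots> = (\<Sum>m\<in>{1..n}. \<phi> (s i (s i m)) * int (x (s i m)))"
    using sum.permute[OF s_permutes[OF assms], of "\<lambda>m. \<phi> (s i m) * int (x m)"] by (simp add: comp_def)
  also have "\<dots> = dot n \<phi> (x \<circ> s i)" by (simp add: dot_def s_s)
  finally show ?thesis by simp
qed

lemma hull_sw: assumes "1 \<le> i" "i < n" "hull n V c" shows "hull n ((\<lambda>x. x \<circ> s i) ` V) (c \<circ> s i)"
  unfolding hull_def
proof
  fix \<phi>
  obtain x where "x \<in> V" "dot n (\<phi> \<circ> s i) c \<le> dot n (\<phi> \<circ> s i) x" using assms(3) unfolding hull_def by blast
  then show "\<exists>x\<in>(\<lambda>x. x \<circ> s i) ` V. dot n \<phi> (c \<circ> s i) \<le> dot n \<phi> x"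
    using dot_sw[OF assms(1,2)] by (intro bexI[of _ "x \<circ> s i"]) auto
qed

lemma dot_split: assumes "1 \<le> i" "i < n"
  shows "dot n \<phi> x = (\<Sum>m\<in>{1..n} - {i, Suc i}. \<phi> m * int (x m)) + \<phi> i * int (x i) + \<phi> (Suc i) * int (x (Suc i))"
proof -
  have e: "{1..n} = insert i (insert (Suc i) ({1..n} - {i, Suc i}))" using assms by auto
  show ?thesis unfolding dot_def by (subst e) (simp add: algebra_simps)
qed

lemma lin_aux: fixes a b t u p q :: int
  assumes "t + u = p + q" "min p q \<le> u" "u \<le> max p q"
  shows "a * t + b * u \<le> max (a * p + b * q) (a * q + b * p)"
proof -
  have e1: "a * t + b * u - (a * p + b * q) = (b - a) * (u - q)" using assms(1)
    by (simp add: algebra_simps) (smt (verit) assms(1) distrib_left)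
  have e2: "a * t + b * u - (a * q + b * p) = (b - a) * (u - p)" using assms(1)
    by (simp add: algebra_simps) (smt (verit) assms(1) distrib_left)
  have "(b - a) * (u - q) \<le> 0 \<or> (b - a) * (u - p) \<le> 0"
  proof (cases "b - a \<ge> 0")
    case True
    then show ?thesis using assms(3)
      by (cases "p \<le> q") (auto intro: mult_nonneg_nonpos simp: max_def)
  next
    case False
    then show ?thesis using assms(2)
      by (cases "p \<le> q") (auto intro: mult_nonpos_nonneg simp: min_def)
  qed
  then show ?thesis using e1 e2 by linarith
qed

lemma seg_dot: assumes "1 \<le> i" "i < n" "seg i e d"
  shows "dot n \<phi> (L d) \<le> max (dot n \<phi> (L e)) (dot n \<phi> (L e \<circ> s i))"
proof -
  let ?R = "\<lambda>x. (\<Sum>m\<in>{1..n} - {i, Suc i}. \<phi> m * int (x m))"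
  have sd: "\<forall>m. m \<noteq> i \<longrightarrow> m \<noteq> Suc i \<longrightarrow> L d m = L e m"
    and sum: "L d i + L d (Suc i) = L e i + L e (Suc i)"
    and mn: "min (L e i) (L e (Suc i)) \<le> L d (Suc i)" and mx: "L d (Suc i) \<le> max (L e i) (L e (Suc i))"
    using assms(3) unfolding seg_def by auto
  have r1: "?R (L d) = ?R (L e)" by (intro sum.cong refl) (use sd in auto)
  have r2: "?R (L e \<circ> s i) = ?R (L e)" by (intro sum.cong refl) (auto simp: s_simps)
  have "\<phi> i * int (L d i) + \<phi> (Suc i) * int (L d (Suc i)) \<le>
     max (\<phi> i * int (L e i) + \<phi> (Suc i) * int (L e (Suc i))) (\<phi> i * int (L e (Suc i)) + \<phi> (Suc i) * int (L e i))"
    by (rule lin_aux) (use sum mn mx in auto)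
  then show ?thesis
    unfolding dot_split[OF assms(1,2)] r1 r2
    by (simp add: s_simps max_def split: if_splits)
qed

lemma hull_step: assumes "1 \<le> i" "i < n" "hull n V (L e)" "seg i e d"
  shows "hull n (V \<union> (\<lambda>x. x \<circ> s i) ` V) (L d)"
  unfolding hull_def
proof
  fix \<phi>
  have h2: "hull n ((\<lambda>x. x \<circ> s i) ` V) (L e \<circ> s i)" by (rule hull_sw[OF assms(1-3)])
  have m: "dot n \<phi> (L d) \<le> max (dot n \<phi> (L e)) (dot n \<phi> (L e \<circ> s i))" by (rule seg_dot[OF assms(1,2,4)])
  show "\<exists>x\<in>V \<union> (\<lambda>x. x \<circ> s i) ` V. dot n \<phi> (L d) \<le> dot n \<phi> x"
  proof (cases "dot n \<phi> (L e) \<le> dot n \<phi> (L e \<circ> s i)")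
    case True
    then obtain x where "x \<in> (\<lambda>x. x \<circ> s i) ` V" "dot n \<phi> (L e \<circ> s i) \<le> dot n \<phi> x"
      using h2 unfolding hull_def by blast
    then show ?thesis using m True by (intro bexI[of _ x]) auto
  next
    case False
    then obtain x where "x \<in> V" "dot n \<phi> (L e) \<le> dot n \<phi> x"
      using assms(3) unfolding hull_def by blast
    then show ?thesis using m False by (intro bexI[of _ x]) auto
  qed
qed

lemma dot_Ssum: assumes "1 \<le> j" shows "dot n (\<lambda>m. if j \<le> m then 1 else 0) x = int (Ssum n x j)"
proof -
  have "dot n (\<lambda>m. if j \<le> m then 1 else 0) x = (\<Sum>m\<in>{1..n}. if j \<le> m then int (x m) else 0)"
    unfolding dot_def by (intro sum.cong refl) auto
  also have "\<dots> = (\<Sum>m\<in>{m\<in>{1..n}. j \<le> m}. int (x m))" by (rule sum.inter_filter[symmetric]) simp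
  also have "{m\<in>{1..n}. j \<le> m} = {j..n}" using assms by auto
  finally show ?thesis by (simp add: Ssum_def)
qed

lemma hull_Ssum: assumes "hull n V c" "1 \<le> j" shows "\<exists>x\<in>V. Ssum n c j \<le> Ssum n x j"
proof -
  obtain x where "x \<in> V" "dot n (\<lambda>m. if j \<le> m then 1 else 0) c \<le> dot n (\<lambda>m. if j \<le> m then 1 else 0) x"
    using assms(1) unfolding hull_def by blast
  then show ?thesis using dot_Ssum[OF assms(2)] by auto
qed

lemma lex_from_Ssum: assumes "supp n c" "supp n b" "\<forall>j\<ge>1. Ssum n c j \<le> Ssum n b j" "c \<noteq> b"
  shows "\<exists>j. c j < b j \<and> (\<forall>l>j. c l = b l)"
proof -
  let ?D = "{m. c m \<noteq> b m}"
  have sub: "?D \<subseteq> {1..n}"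
  proof
    fix x assume "x \<in> ?D"
    then have "c x \<noteq> b x" by simp
    then show "x \<in> {1..n}" using assms(1,2) unfolding supp_def by (metis atLeastAtMost_iff not_le)
  qed
  have ne: "?D \<noteq> {}" using assms(4) by auto
  have fin: "finite ?D" using sub finite_subset by blast
  define J where "J = Max ?D"
  have J: "J \<in> ?D" unfolding J_def using fin ne by (rule Max_in)
  have above: "\<forall>l>J. c l = b l" unfolding J_def using fin Max_ge not_le by blast
  have Jn: "1 \<le> J" "J \<le> n" using J sub by auto
  have "Ssum n c (Suc J) = Ssum n b (Suc J)" unfolding Ssum_def by (intro sum.cong refl) (use above in auto)
  moreover have "Ssum n c J \<le> Ssum n b J" using assms(3) Jn by auto
  ultimately have "c J \<le> b J" using Ssum_rec[OF Jn(2), of c] Ssum_rec[OF Jn(2), of b] by simp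
  then have "c J < b J" using J by auto
  then show ?thesis using above by blast
qed


definition Inv :: "nat \<Rightarrow> (nat \<Rightarrow> nat) \<Rightarrow> (nat \<times> nat) set" where
  "Inv n w = {(i, j). 1 \<le> i \<and> i < j \<and> j \<le> n \<and> w i > w j}"

lemma inv_count_Inv: "inv_count n w = card (Inv n w)" by (simp add: inv_count_def Inv_def)

lemma finite_Inv: "finite (Inv n w)"
  by (rule finite_subset[of _ "{1..n} \<times> {1..n}"]) (auto simp: Inv_def)

lemma s_order: "x \<noteq> y \<Longrightarrow> \<not> (x = i \<and> y = Suc i) \<Longrightarrow> \<not> (x = Suc i \<and> y = i) \<Longrightarrow> (s i y < s i x \<longleftrightarrow> y < x)"
  unfolding s_def transpose_def by auto

lemma Inv_step: assumes v: "v permutes {1..n}" and i: "1 \<le> i" "i < n"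
  and p: "v p = i" and q: "v q = Suc i" and pq: "p < q"
  shows "Inv n (s i \<circ> v) = insert (p, q) (Inv n v) \<and> (p, q) \<notin> Inv n v"
proof -
  have inj: "inj v" using v by (rule permutes_inj)
  have pin: "p \<in> {1..n}" "q \<in> {1..n}"
  proof -
    show "p \<in> {1..n}"
    proof (rule ccontr)
      assume a: "p \<notin> {1..n}"
      have "v p = p" using v a by (rule permutes_not_in)
      then show False using a p i by auto
    qed
    show "q \<in> {1..n}"
    proof (rule ccontr)
      assume a: "q \<notin> {1..n}"
      have "v q = q" using v a by (rule permutes_not_in)
      then show False using a q i by auto
    qed
  qed
  have notin: "(p, q) \<notin> Inv n v" using p q by (auto simp: Inv_def)
  have "Inv n (s i \<circ> v) = insert (p, q) (Inv n v)"
  proof (intro set_eqI iffI)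
    fix x assume "x \<in> Inv n (s i \<circ> v)"
    then obtain a b where x: "x = (a, b)" "1 \<le> a" "a < b" "b \<le> n" "s i (v a) > s i (v b)"
      by (auto simp: Inv_def)
    have ab: "v a \<noteq> v b" using inj x(3) by (metis injD less_irrefl)
    show "x \<in> insert (p, q) (Inv n v)"
    proof (cases "v a = i \<and> v b = Suc i")
      case True then have "v a = v p" "v b = v q" using p q by simp_all
      then have "a = p" "b = q" by (simp_all add: inj_eq[OF inj])
      then show ?thesis using x by simp
    next
      case False
      have F2: "\<not> (v a = Suc i \<and> v b = i)"
      proof
        assume "v a = Suc i \<and> v b = i"
        then show False using x(5) by (simp add: s_simps)
      qed
      have "v a > v b" using x(5) s_order[OF ab False F2] by simp
      then show ?thesis using x by (auto simp: Inv_def)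
    qed
  next
    fix x assume "x \<in> insert (p, q) (Inv n v)"
    then show "x \<in> Inv n (s i \<circ> v)"
    proof
      assume "x = (p, q)" then show ?thesis using pin pq p q by (auto simp: Inv_def s_simps)
    next
      assume "x \<in> Inv n v"
      then obtain a b where x: "x = (a, b)" "1 \<le> a" "a < b" "b \<le> n" "v a > v b"
        by (auto simp: Inv_def)
      have F1: "\<not> (v a = i \<and> v b = Suc i)" using x(5) by auto
      have ab: "v a \<noteq> v b" using x(5) by simp
      show ?thesis
      proof (cases "v a = Suc i \<and> v b = i")
        case True
        then have "v a = v q" "v b = v p" using p q by simp_all
        then have "a = q" "b = p" by (simp_all add: inj_eq[OF inj])
        then show ?thesis using x pq by simp
      next
        case False
        then have "s i (v a) > s i (v b)" using x(5) s_order[OF ab F1 False] by simp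
      then show ?thesis using x by (auto simp: Inv_def)
      qed
    qed
  qed
  then show ?thesis using notin by simp
qed

lemma perm_pos: assumes "v permutes {1..n}" "k \<in> {1..n}" shows "\<exists>p\<in>{1..n}. v p = k"
  using assms by (metis permutes_image image_iff)

lemma inv_count_step: assumes v: "v permutes {1..n}" and i: "1 \<le> i" "i < n"
  shows "\<exists>p q. p \<in> {1..n} \<and> q \<in> {1..n} \<and> v p = i \<and> v q = Suc i \<and>
    ((p < q \<and> inv_count n (s i \<circ> v) = inv_count n v + 1) \<or> (q < p \<and> inv_count n (s i \<circ> v) + 1 = inv_count n v))"
proof -
  obtain p where p: "p \<in> {1..n}" "v p = i" using perm_pos[OF v, of i] i by auto
  obtain q where q: "q \<in> {1..n}" "v q = Suc i" using perm_pos[OF v, of "Suc i"] i by auto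
  have "p \<noteq> q" using p q by auto
  then consider "p < q" | "q < p" by linarith
  then show ?thesis
  proof cases
    case 1
    from Inv_step[OF v i p(2) q(2) 1] have "inv_count n (s i \<circ> v) = inv_count n v + 1"
      by (simp add: inv_count_Inv finite_Inv)
    then show ?thesis using p q 1 by blast
  next
    case 2
    have v': "s i \<circ> v permutes {1..n}" by (rule permutes_compose[OF v s_permutes[OF i]])
    have e: "s i \<circ> (s i \<circ> v) = v" by (auto simp: s_s)
    from Inv_step[OF v' i, of q p] q p 2 have "Inv n v = insert (q, p) (Inv n (s i \<circ> v)) \<and> (q, p) \<notin> Inv n (s i \<circ> v)"
      by (simp add: e s_simps)
    then have "inv_count n (s i \<circ> v) + 1 = inv_count n v"
      by (simp add: inv_count_Inv finite_Inv)
    then show ?thesis using p q 2 by blast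
  qed
qed

lemma word_perm_Cons: "word_perm (i # ws) = s i \<circ> word_perm ws"
  by (simp add: word_perm_def)

lemma word_perm_Nil: "word_perm [] = id" by (simp add: word_perm_def)

lemma word_perm_permutes: "\<forall>x\<in>set ws. 1 \<le> x \<and> x < n \<Longrightarrow> word_perm ws permutes {1..n}"
proof (induction ws)
  case Nil then show ?case by (simp only: word_perm_Nil permutes_id)
next
  case (Cons i ws)
  have "word_perm ws permutes {1..n}" using Cons by auto
  moreover have "s i permutes {1..n}" using Cons.prems by (intro s_permutes) auto
  ultimately show ?case by (simp only: word_perm_Cons) (rule permutes_compose)
qed

lemma inv_count_le: "\<forall>x\<in>set ws. 1 \<le> x \<and> x < n \<Longrightarrow> inv_count n (word_perm ws) \<le> length ws"
proof (induction ws)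
  case Nil
  have e: "Inv n id = {}" by (auto simp: Inv_def)
  show ?case by (simp only: word_perm_Nil inv_count_Inv e) simp
next
  case (Cons i ws)
  have v: "word_perm ws permutes {1..n}" using Cons.prems by (intro word_perm_permutes) auto
  have "inv_count n (s i \<circ> word_perm ws) \<le> inv_count n (word_perm ws) + 1"
    using inv_count_step[OF v, of i] Cons.prems by auto
  moreover have "inv_count n (word_perm ws) \<le> length ws" using Cons by auto
  ultimately show ?case by (simp only: word_perm_Cons length_Cons)
qed

lemma reduced_tail: assumes "reduced_word n w (i # ws)"
  shows "reduced_word n (word_perm ws) ws"
    "\<exists>p q. p \<in> {1..n} \<and> q \<in> {1..n} \<and> word_perm ws p = i \<and> word_perm ws q = Suc i \<and> p < q"
proof -
  have lt: "\<forall>x\<in>set (i # ws). 1 \<le> x \<and> x < n" and w: "word_perm (i # ws) = w"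
    and len: "length (i # ws) = inv_count n w" using assms by (auto simp: reduced_word_def)
  have v: "word_perm ws permutes {1..n}" using lt by (intro word_perm_permutes) auto
  have le: "inv_count n (word_perm ws) \<le> length ws" using lt by (intro inv_count_le) auto
  obtain p q where pq: "p \<in> {1..n}" "q \<in> {1..n}" "word_perm ws p = i" "word_perm ws q = Suc i"
    and c: "(p < q \<and> inv_count n (s i \<circ> word_perm ws) = inv_count n (word_perm ws) + 1) \<or>
        (q < p \<and> inv_count n (s i \<circ> word_perm ws) + 1 = inv_count n (word_perm ws))"
    using inv_count_step[OF v, of i] lt by auto
  have wc: "inv_count n (s i \<circ> word_perm ws) = Suc (length ws)" using len w by (simp add: word_perm_Cons)
  have "p < q \<and> inv_count n (word_perm ws) = length ws" using c wc le by auto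
  then show "reduced_word n (word_perm ws) ws" using lt by (auto simp: reduced_word_def)
  show "\<exists>p q. p \<in> {1..n} \<and> q \<in> {1..n} \<and> word_perm ws p = i \<and> word_perm ws q = Suc i \<and> p < q"
    using \<open>p < q \<and> _\<close> pq by blast
qed

lemma Des_sub: assumes v: "v permutes {1..n}" and pq: "v p = i" "v q = Suc i" "p < q"
  shows "Des_perm n v \<subseteq> Des_perm n (s i \<circ> v)"
proof
  fix j assume "j \<in> Des_perm n v"
  then have j: "1 \<le> j" "j < n" "v j > v (Suc j)" by (auto simp: Des_perm_def)
  have "\<not> (v j = Suc i \<and> v (Suc j) = i)"
  proof
    assume "v j = Suc i \<and> v (Suc j) = i"
    then have "v j = v q" "v (Suc j) = v p" using pq by simp_all
    then have "j = q" "Suc j = p" by (simp_all add: inj_eq[OF permutes_inj[OF v]])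
    then show False using pq by simp
  qed
  moreover have "\<not> (v j = i \<and> v (Suc j) = Suc i)" using j(3) by auto
  moreover have "v j \<noteq> v (Suc j)" using j(3) by simp
  ultimately have "s i (v j) > s i (v (Suc j))" using j(3) s_order by blast
  then show "j \<in> Des_perm n (s i \<circ> v)" using j by (auto simp: Des_perm_def)
qed


lemma dec_chain: "(\<And>j. l \<le> j \<Longrightarrow> j < r \<Longrightarrow> (a::nat \<Rightarrow> 'b::linorder) (Suc j) \<le> a j) \<Longrightarrow> l \<le> x \<Longrightarrow> x \<le> y \<Longrightarrow> y \<le> r \<Longrightarrow> a y \<le> a x"
proof (induction y)
  case 0 then show ?case by simp
next
  case (Suc y)
  show ?case
  proof (cases "x \<le> y")
    case True
    then have "a y \<le> a x" using Suc by simp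
    moreover have "a (Suc y) \<le> a y" using Suc True by simp
    ultimately show ?thesis by simp
  next
    case False then have "x = Suc y" using Suc by simp
    then show ?thesis by simp
  qed
qed

lemma inc_chain: "(\<And>j. l \<le> j \<Longrightarrow> j < r \<Longrightarrow> (f::nat \<Rightarrow> nat) j < f (Suc j)) \<Longrightarrow> l \<le> x \<Longrightarrow> x \<le> y \<Longrightarrow> y \<le> r \<Longrightarrow> f x + (y - x) \<le> f y"
proof (induction y)
  case 0 then show ?case by simp
next
  case (Suc y)
  show ?case
  proof (cases "x \<le> y")
    case True
    then have "f x + (y - x) \<le> f y" using Suc by simp
    moreover have "f y < f (Suc y)" using Suc True by simp
    ultimately show ?thesis using True by simp
  next
    case False then have "x = Suc y" using Suc by simp
    then show ?thesis by simp
  qed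
qed

lemma inc_id: assumes "\<And>j. 1 \<le> j \<Longrightarrow> j < n \<Longrightarrow> (f::nat \<Rightarrow> nat) j < f (Suc j)"
  and "\<And>k. k \<in> {1..n} \<Longrightarrow> f k \<in> {1..n}" and k: "k \<in> {1..n}"
  shows "f k = k"
proof -
  have "f 1 + (k - 1) \<le> f k" by (rule inc_chain[of 1 n f]) (use assms(1) k in auto)
  moreover have "f k + (n - k) \<le> f n" by (rule inc_chain[of 1 n f]) (use assms(1) k in auto)
  moreover have "1 \<le> f 1" "f n \<le> n" using assms(2)[of 1] assms(2)[of n] k by auto
  ultimately show ?thesis using k by auto
qed

lemma exists_reduced: "w permutes {1..n} \<Longrightarrow> \<exists>ws. reduced_word n w ws"
proof (induction "inv_count n w" arbitrary: w)
  case 0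
  show ?case
  proof (cases "\<exists>i. 1 \<le> i \<and> i < n \<and> inv w (Suc i) < inv w i")
    case True
    then obtain i where i: "1 \<le> i" "i < n" "inv w (Suc i) < inv w i" by blast
    obtain p q where "p \<in> {1..n}" "q \<in> {1..n}" "w p = i" "w q = Suc i"
      "(p < q \<and> inv_count n (s i \<circ> w) = inv_count n w + 1) \<or> (q < p \<and> inv_count n (s i \<circ> w) + 1 = inv_count n w)"
      using inv_count_step[OF "0.prems" i(1,2)] by blast
    moreover have "inv w i = p" "inv w (Suc i) = q" using calculation permutes_inv_eq[OF "0.prems"] by auto
    ultimately show ?thesis using i "0.hyps" by auto
  next
    case False
    let ?u = "inv w"
    have u: "?u permutes {1..n}" using "0.prems" by (rule permutes_inv)
    have inc: "?u j < ?u (Suc j)" if "1 \<le> j" "j < n" for j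
    proof -
      have "?u j \<noteq> ?u (Suc j)" by (simp only: inj_eq[OF permutes_inj[OF u]])
      then show ?thesis using False that by auto
    qed
    have uk: "?u k = k" if "k \<in> {1..n}" for k
      by (rule inc_id[where f="inv w", OF inc]) (use that permutes_in_image[OF u] in auto)
    have "w = id"
    proof
      fix k show "w k = id k"
      proof (cases "k \<in> {1..n}")
        case True
        then have "w (?u k) = k" using permutes_inverses(1)[OF "0.prems"] by simp
        then show ?thesis using uk[OF True] by simp
      next
        case False then show ?thesis using permutes_not_in[OF "0.prems"] by simp
      qed
    qed
    then have "word_perm [] = w" by (simp add: word_perm_Nil)
    moreover have "length [] = inv_count n w" using "0.hyps" by simp
    ultimately have "reduced_word n w []" unfolding reduced_word_def by simp
    then show ?thesis by blast
  qed
next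
  case (Suc k)
  show ?case
  proof (cases "\<exists>i. 1 \<le> i \<and> i < n \<and> inv w (Suc i) < inv w i")
    case True
    then obtain i where i: "1 \<le> i" "i < n" "inv w (Suc i) < inv w i" by blast
    obtain p q where pq: "p \<in> {1..n}" "q \<in> {1..n}" "w p = i" "w q = Suc i"
      and c: "(p < q \<and> inv_count n (s i \<circ> w) = inv_count n w + 1) \<or> (q < p \<and> inv_count n (s i \<circ> w) + 1 = inv_count n w)"
      using inv_count_step[OF Suc.prems i(1,2)] by blast
    have "inv w i = p" "inv w (Suc i) = q" using pq permutes_inv_eq[OF Suc.prems] by auto
    then have cnt: "inv_count n (s i \<circ> w) + 1 = inv_count n w" using c i by auto
    have w': "s i \<circ> w permutes {1..n}" by (rule permutes_compose[OF Suc.prems s_permutes[OF i(1,2)]])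
    obtain ws where ws: "reduced_word n (s i \<circ> w) ws" using Suc.hyps(1)[of "s i \<circ> w"] cnt Suc.hyps(2) w' by auto
    have "word_perm (i # ws) = w" using ws unfolding reduced_word_def word_perm_Cons by (auto simp: s_s)
    then have "reduced_word n w (i # ws)" using ws i cnt by (auto simp: reduced_word_def)
    then show ?thesis by blast
  next
    case False
    let ?u = "inv w"
    have u: "?u permutes {1..n}" using Suc.prems by (rule permutes_inv)
    have inc: "?u j < ?u (Suc j)" if "1 \<le> j" "j < n" for j
    proof -
      have "?u j \<noteq> ?u (Suc j)" by (simp only: inj_eq[OF permutes_inj[OF u]])
      then show ?thesis using False that by auto
    qed
    have uk: "?u k = k" if "k \<in> {1..n}" for k
      by (rule inc_id[where f="inv w", OF inc]) (use that permutes_in_image[OF u] in auto)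
    have "w = id"
    proof
      fix k show "w k = id k"
      proof (cases "k \<in> {1..n}")
        case True
        then have "w (?u k) = k" using permutes_inverses(1)[OF Suc.prems] by simp
        then show ?thesis using uk[OF True] by simp
      next
        case False then show ?thesis using permutes_not_in[OF Suc.prems] by simp
      qed
    qed
    then have "Inv n w = {}" by (auto simp: Inv_def)
    then show ?thesis using Suc.hyps(2) by (simp add: inv_count_Inv)
  qed
qed

definition SD :: "nat \<Rightarrow> (nat \<Rightarrow> nat) \<Rightarrow> nat set" where
  "SD n a = {j. 1 \<le> j \<and> j < n \<and> a (Suc j) < a j}"

lemma strict_step: assumes v: "v permutes {1..n}" and i: "1 \<le> i" "i < n"
  and pq: "v p = i" "v q = Suc i" "p < q" "p \<in> {1..n}" "q \<in> {1..n}"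
  and dec: "\<And>j. 1 \<le> j \<Longrightarrow> j < n \<Longrightarrow> a (Suc j) \<le> a j"
  and des: "Des_perm n (s i \<circ> v) \<subseteq> SD n a"
  shows "a q < a p"
proof (rule ccontr)
  assume "\<not> a q < a p"
  moreover have "a q \<le> a p" by (rule dec_chain[of p q a]) (use dec pq in auto)
  ultimately have eq: "a q = a p" by simp
  have flat: "a (Suc j) = a j" if "p \<le> j" "j < q" for j
  proof -
    have "a (Suc j) \<le> a j" using dec that pq by auto
    moreover have "a q \<le> a (Suc j)" by (rule dec_chain[of p q a]) (use dec pq that in auto)
    moreover have "a j \<le> a p" by (rule dec_chain[of p q a]) (use dec pq that in auto)
    ultimately show ?thesis using eq by simp
  qed
  have winc: "(s i \<circ> v) j < (s i \<circ> v) (Suc j)" if "p \<le> j" "j < q" for j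
  proof -
    have "j \<notin> SD n a" using flat[OF that] by (simp add: SD_def)
    then have "j \<notin> Des_perm n (s i \<circ> v)" using des by blast
    moreover have "1 \<le> j" "j < n" using that pq by auto
    ultimately have "\<not> (s i \<circ> v) j > (s i \<circ> v) (Suc j)" by (simp add: Des_perm_def)
    moreover have "(s i \<circ> v) j \<noteq> (s i \<circ> v) (Suc j)"
      by (simp only: inj_eq[OF permutes_inj[OF permutes_compose[OF v s_permutes[OF i]]]])
    ultimately show ?thesis by simp
  qed
  have "(s i \<circ> v) p + (q - p) \<le> (s i \<circ> v) q" by (rule inc_chain[of p q]) (use winc pq in auto)
  then show False using pq by (simp add: s_simps)
qed


lemma lookup_const_mult: "Poly_Mapping.lookup (const c * (p::'a::field mpoly)) k = c * Poly_Mapping.lookup p k"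
proof -
  have "const c * p = (\<Sum>e\<in>Poly_Mapping.keys p. Poly_Mapping.single e (c * Poly_Mapping.lookup p e))"
    by (subst poly_expand[of p]) (simp add: sum_distrib_left const_def mult_single)
  then show ?thesis by (simp add: lookup_sum lookup_single when_def in_keys_iff)
qed

lemma keys_const_mult: "Poly_Mapping.keys (const c * (p::'a::field mpoly)) \<subseteq> Poly_Mapping.keys p"
  by (auto simp: in_keys_iff lookup_const_mult)

definition FW :: "nat list \<Rightarrow> 'a::field mpoly \<Rightarrow> 'a mpoly" where
  "FW ws = foldr (\<lambda>i g. pibar_op i \<circ> g) ws id"

lemma FW_Nil: "FW [] f = f" by (simp add: FW_def)
lemma FW_Cons: "FW (i # ws) f = pibar_op i (FW ws f)" by (simp add: FW_def)

lemma pibar_w_FW: "pibar_w n w = FW (SOME ws. reduced_word n w ws)"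
  by (simp add: pibar_w_def FW_def)

definition VW :: "nat list \<Rightarrow> (nat \<Rightarrow> nat) \<Rightarrow> (nat \<Rightarrow> nat) set" where
  "VW ws a = foldr (\<lambda>i V. V \<union> (\<lambda>x. x \<circ> s i) ` V) ws {a}"

lemma VW_Nil: "VW [] a = {a}" by (simp add: VW_def)
lemma VW_Cons: "VW (i # ws) a = VW ws a \<union> (\<lambda>x. x \<circ> s i) ` VW ws a" by (simp add: VW_def)

lemma lookup_push_perm: "w permutes S \<Longrightarrow> L (push w a) m = L a (inv w m)"
  by (rule lookup_push_bij) (rule permutes_bij)

lemma push_id: "push id a = a"
  by (rule poly_mapping_eqI) (simp add: lookup_push_bij)

lemma lookup_push_comp: assumes v: "v permutes {1..n}" and i: "1 \<le> i" "i < n"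
  shows "L (push (s i \<circ> v) a) m = L (push v a) (s i m)"
proof -
  have w: "s i \<circ> v permutes {1..n}" by (rule permutes_compose[OF v s_permutes[OF i]])
  have "inv (s i \<circ> v) = inv v \<circ> inv (s i)"
    by (rule o_inv_distrib) (auto intro: permutes_bij[OF v] simp: bij_s)
  then show ?thesis using lookup_push_perm[OF w] lookup_push_perm[OF v] by (simp add: inv_s)
qed

lemma no_hit:
  assumes i: "1 \<le> i" "i < n"
    and hullE: "hull n V (L e)" and suppE: "supp n (L e)"
    and Vle: "\<forall>x\<in>V. lelv n x (L b) \<and> (\<forall>m. x m \<le> H)" and bH: "\<forall>m. L b m \<le> H"
    and bdec: "L b (Suc i) < L b i"
    and sg: "seg i e d" and dd: "\<forall>m. L d m = L b (s i m)"
  shows "e = b"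
proof -
  have off: "L e m = L b m" if "m \<noteq> i" "m \<noteq> Suc i" for m
    using sg that dd unfolding seg_def by (auto simp: s_simps)
  have sm: "L e i + L e (Suc i) = L b i + L b (Suc i)"
    using sg dd unfolding seg_def by (auto simp: s_simps)
  have high: "Ssum n (L e) (Suc (Suc i)) = Ssum n (L b) (Suc (Suc i))"
    unfolding Ssum_def by (intro sum.cong refl) (auto intro: off)
  have high2: "Ssum n (L e \<circ> s i) (Suc (Suc i)) = Ssum n (L e) (Suc (Suc i))"
    "Ssum n (L b \<circ> s i) (Suc (Suc i)) = Ssum n (L b) (Suc (Suc i))"
    unfolding Ssum_def by (auto intro!: sum.cong simp: s_simps)
  obtain x where x: "x \<in> V" "Ssum n (L e) (Suc i) \<le> Ssum n x (Suc i)"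
    using hull_Ssum[OF hullE, of "Suc i"] by auto
  have "Ssum n x (Suc i) \<le> Ssum n (L b) (Suc i)" using Vle x(1) bH by (intro lelv_Ssum[of n x "L b" H]) auto
  then have A: "Ssum n (L e) (Suc i) \<le> Ssum n (L b) (Suc i)" using x by simp
  have h2: "hull n ((\<lambda>x. x \<circ> s i) ` V) (L e \<circ> s i)" by (rule hull_sw[OF i hullE])
  obtain x' where x': "x' \<in> (\<lambda>x. x \<circ> s i) ` V" "Ssum n (L e \<circ> s i) (Suc i) \<le> Ssum n x' (Suc i)"
    using hull_Ssum[OF h2, of "Suc i"] by auto
  then obtain y where y: "y \<in> V" "x' = y \<circ> s i" by auto
  have "lelv n (y \<circ> s i) (L b \<circ> s i)" using Vle y(1) bdec i by (intro lelv_sw) auto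
  then have "Ssum n x' (Suc i) \<le> Ssum n (L b \<circ> s i) (Suc i)"
    using Vle y bH by (intro lelv_Ssum[of n x' "L b \<circ> s i" H]) auto
  then have B: "Ssum n (L e \<circ> s i) (Suc i) \<le> Ssum n (L b \<circ> s i) (Suc i)" using x' by simp
  have si: "Suc i \<le> n" using i by simp
  have e1: "L e (Suc i) \<le> L b (Suc i)"
    using A Ssum_rec[OF si, of "L e"] Ssum_rec[OF si, of "L b"] high by simp
  have e2: "L e i \<le> L b i"
    using B Ssum_rec[OF si, of "L e \<circ> s i"] Ssum_rec[OF si, of "L b \<circ> s i"] high high2 by (simp add: s_simps)
  have "L e i = L b i" "L e (Suc i) = L b (Suc i)" using e1 e2 sm by linarith+
  then show "e = b" by (intro poly_mapping_eqI) (metis off)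
qed


definition INV :: "nat \<Rightarrow> nat \<Rightarrow> (nat \<Rightarrow>\<^sub>0 nat) \<Rightarrow> nat list \<Rightarrow> (nat \<Rightarrow> nat) \<Rightarrow> 'a::field itself \<Rightarrow> bool" where
  "INV n H a ws w (_::'a itself) \<longleftrightarrow>
     Poly_Mapping.lookup (FW ws (mon a :: 'a mpoly)) (push w a) = 1 \<and>
     (\<forall>c\<in>Poly_Mapping.keys (FW ws (mon a :: 'a mpoly)). supp n (L c) \<and> hull n (VW ws (L a)) (L c)) \<and>
     (\<forall>x\<in>VW ws (L a). lelv n x (L (push w a)) \<and> (\<forall>m. x m \<le> H)) \<and>
     (\<forall>m. L (push w a) m \<le> H) \<and> supp n (L (push w a))"

lemma sum_single_point: assumes "finite K" "b \<in> K" "\<And>e. e \<in> K \<Longrightarrow> e \<noteq> b \<Longrightarrow> g e = 0"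
  shows "sum g K = g b"
proof -
  have "sum g K = g b + sum g (K - {b})" using assms by (simp add: sum.remove)
  also have "sum g (K - {b}) = 0" using assms by (intro sum.neutral) auto
  finally show ?thesis by simp
qed

lemma main_induct:
  fixes a :: "nat \<Rightarrow>\<^sub>0 nat"
  assumes suppA: "supp n (L a)" and aH: "\<forall>m. L a m \<le> H"
    and dec: "\<And>j. 1 \<le> j \<Longrightarrow> j < n \<Longrightarrow> L a (Suc j) \<le> L a j"
  shows "reduced_word n w ws \<Longrightarrow> Des_perm n w \<subseteq> SD n (L a) \<Longrightarrow> INV n H a ws w TYPE('a::field)"
proof (induction ws arbitrary: w)
  case Nil
  then have w: "w = id" by (simp add: reduced_word_def word_perm_Nil)
  show ?case unfolding INV_def w push_id FW_Nil VW_Nil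
    using suppA aH by (simp add: hull_def lelv_refl)
next
  case (Cons i ws)
  let ?v = "word_perm ws"
  have red: "reduced_word n ?v ws" using reduced_tail(1)[OF Cons.prems(1)] .
  obtain p q where pq: "p \<in> {1..n}" "q \<in> {1..n}" "?v p = i" "?v q = Suc i" "p < q"
    using reduced_tail(2)[OF Cons.prems(1)] by blast
  have lt: "\<forall>x\<in>set (i # ws). 1 \<le> x \<and> x < n" and wdef: "w = s i \<circ> ?v"
    using Cons.prems(1) by (auto simp: reduced_word_def word_perm_Cons)
  have i: "1 \<le> i" "i < n" using lt by auto
  have v: "?v permutes {1..n}" using lt by (intro word_perm_permutes) auto
  have desv: "Des_perm n ?v \<subseteq> SD n (L a)"
    using Des_sub[OF v pq(3,4,5)] Cons.prems(2) wdef by blast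
  have IH: "INV n H a ws ?v TYPE('a)" using Cons.IH[OF red desv] .
  let ?f = "FW ws (mon a :: 'a mpoly)"
  let ?b = "push ?v a"
  let ?V = "VW ws (L a)"
  have f1: "Poly_Mapping.lookup ?f ?b = 1"
    and f2: "\<forall>c\<in>Poly_Mapping.keys ?f. supp n (L c) \<and> hull n ?V (L c)"
    and f3: "\<forall>x\<in>?V. lelv n x (L ?b) \<and> (\<forall>m. x m \<le> H)"
    and f4: "\<forall>m. L ?b m \<le> H" and f5: "supp n (L ?b)"
    using IH unfolding INV_def by auto
  have bw: "L (push w a) m = L ?b (s i m)" for m unfolding wdef by (rule lookup_push_comp[OF v i])
  have iv: "inv ?v i = p" "inv ?v (Suc i) = q"
    using permutes_inv_eq[OF v, of i p] permutes_inv_eq[OF v, of "Suc i" q] pq by simp_all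
  have binv: "L ?b i = L a p" "L ?b (Suc i) = L a q"
    by (simp_all only: lookup_push_perm[OF v] iv)
  have desw: "Des_perm n (s i \<circ> ?v) \<subseteq> SD n (L a)" using Cons.prems(2) by (simp only: wdef)
  have bdec: "L ?b (Suc i) < L ?b i"
    unfolding binv by (rule strict_step[OF v i pq(3,4,5,1,2) _ desw]) (use dec in auto)
  have pbw: "push w a = push (s i) ?b"
    by (rule poly_mapping_eqI) (simp add: bw lookup_push_bij[OF bij_s] inv_s)
  have FWc: "FW (i # ws) (mon a :: 'a mpoly) = (\<Sum>e\<in>Poly_Mapping.keys ?f. const (Poly_Mapping.lookup ?f e) * pbm i e)"
    by (simp add: FW_Cons pibar_eq)
  have nohit: "Poly_Mapping.lookup (pbm i e :: 'a mpoly) (push w a) = 0" if e: "e \<in> Poly_Mapping.keys ?f" "e \<noteq> ?b" for e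
  proof (rule ccontr)
    assume "Poly_Mapping.lookup (pbm i e :: 'a mpoly) (push w a) \<noteq> 0"
    then have "push w a \<in> Poly_Mapping.keys (pbm i e :: 'a mpoly)" by (simp add: in_keys_iff)
    then have sg: "seg i e (push w a)" by (rule keys_pbm)
    have "e = ?b"
      by (rule no_hit[OF i, where V="?V" and e=e and b="?b" and H=H and d="push w a"]) (use f2 e(1) f3 f4 bdec sg bw in auto)
    then show False using e(2) by simp
  qed
  have c1: "Poly_Mapping.lookup (FW (i # ws) (mon a :: 'a mpoly)) (push w a) = 1"
  proof -
    have "Poly_Mapping.lookup (FW (i # ws) (mon a :: 'a mpoly)) (push w a) =
      (\<Sum>e\<in>Poly_Mapping.keys ?f. Poly_Mapping.lookup ?f e * Poly_Mapping.lookup (pbm i e :: 'a mpoly) (push w a))"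
      unfolding FWc lookup_sum lookup_const_mult ..
    also have "\<dots> = Poly_Mapping.lookup ?f ?b * Poly_Mapping.lookup (pbm i ?b :: 'a mpoly) (push w a)"
      by (rule sum_single_point) (use f1 nohit in \<open>auto simp: in_keys_iff\<close>)
    also have "Poly_Mapping.lookup (pbm i ?b :: 'a mpoly) (push w a) = 1"
      unfolding pbw by (rule coeff_pbm[OF bdec])
    finally show ?thesis using f1 by simp
  qed
  have c2: "\<forall>c\<in>Poly_Mapping.keys (FW (i # ws) (mon a :: 'a mpoly)). supp n (L c) \<and> hull n (VW (i # ws) (L a)) (L c)"
  proof
    fix c assume "c \<in> Poly_Mapping.keys (FW (i # ws) (mon a :: 'a mpoly))"
    then have "c \<in> (\<Union>e\<in>Poly_Mapping.keys ?f. Poly_Mapping.keys (const (Poly_Mapping.lookup ?f e) * pbm i e :: 'a mpoly))"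
      unfolding FWc by (rule subsetD[OF keys_sum_sub])
    then obtain e where e: "e \<in> Poly_Mapping.keys ?f" "c \<in> Poly_Mapping.keys (pbm i e :: 'a mpoly)"
      using keys_const_mult by blast
    have sg: "seg i e c" using e(2) by (rule keys_pbm)
    have "hull n (VW (i # ws) (L a)) (L c)"
      unfolding VW_Cons by (rule hull_step[OF i _ sg]) (use f2 e(1) in auto)
    moreover have "supp n (L c)"
    proof -
      have "L c m = L e m" if "m < 1 \<or> n < m" for m using sg that i unfolding seg_def by auto
      then show ?thesis using f2 e(1) unfolding supp_def by auto
    qed
    ultimately show "supp n (L c) \<and> hull n (VW (i # ws) (L a)) (L c)" by simp
  qed
  have lb: "L (push w a) = L ?b \<circ> s i" using bw by auto
  have c3: "\<forall>x\<in>VW (i # ws) (L a). lelv n x (L (push w a)) \<and> (\<forall>m. x m \<le> H)"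
  proof
    fix x assume "x \<in> VW (i # ws) (L a)"
    then consider "x \<in> ?V" | y where "y \<in> ?V" "x = y \<circ> s i" unfolding VW_Cons by auto
    then show "lelv n x (L (push w a)) \<and> (\<forall>m. x m \<le> H)"
    proof cases
      case 1
      then show ?thesis using f3 lelv_trans lelv_up[OF i bdec] unfolding lb by blast
    next
      case 2
      then show ?thesis using f3 lelv_sw[OF i bdec] unfolding lb by auto
    qed
  qed
  have c4: "\<forall>m. L (push w a) m \<le> H" using f4 bw by simp
  have c5: "supp n (L (push w a))" using f5 bw i unfolding supp_def by (auto simp: s_simps)
  show ?case unfolding INV_def using c1 c2 c3 c4 c5 by blast
qed


lemma neglex_asym: "neglex_less a b \<Longrightarrow> \<not> neglex_less b a"
proof
  assume "neglex_less a b" "neglex_less b a"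
  then obtain j1 j2 where 1: "L a j1 < L b j1" "\<forall>l>j1. L a l = L b l"
    and 2: "L b j2 < L a j2" "\<forall>l>j2. L b l = L a l" unfolding neglex_less_def by blast
  consider "j1 < j2" | "j1 = j2" | "j2 < j1" by linarith
  then show False
  proof cases
    case 1 then show False using \<open>\<forall>l>j1. L a l = L b l\<close> 2(1) by (metis less_irrefl)
  next
    case 2 then show False using \<open>L a j1 < L b j1\<close> \<open>L b j2 < L a j2\<close> by simp
  next
    case 3 then show False using \<open>\<forall>l>j2. L b l = L a l\<close> \<open>L a j1 < L b j1\<close> by (metis less_irrefl)
  qed
qed

lemma lead_term_char:
  assumes "Poly_Mapping.lookup f b = 1" "\<And>c. c \<in> Poly_Mapping.keys f \<Longrightarrow> c \<noteq> b \<Longrightarrow> neglex_less c b"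
  shows "lead_term (f::'a::field mpoly) = mon b"
proof -
  have bk: "b \<in> Poly_Mapping.keys f" using assms(1) by (simp add: in_keys_iff)
  have "lead_monom f = b" unfolding lead_monom_def
  proof (rule the_equality)
    show "b \<in> Poly_Mapping.keys f \<and> (\<forall>m'\<in>Poly_Mapping.keys f. m' \<noteq> b \<longrightarrow> neglex_less m' b)"
      using bk assms(2) by blast
  next
    fix m assume m: "m \<in> Poly_Mapping.keys f \<and> (\<forall>m'\<in>Poly_Mapping.keys f. m' \<noteq> m \<longrightarrow> neglex_less m' m)"
    show "m = b"
    proof (rule ccontr)
      assume "m \<noteq> b"
      then have "neglex_less b m" "neglex_less m b" using m bk assms(2) by auto
      then show False using neglex_asym by blast
    qed
  qed
  then show ?thesis unfolding lead_term_def using assms(1) by simp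
qed

lemma lead_main:
  fixes a :: "nat \<Rightarrow>\<^sub>0 nat"
  assumes suppA: "supp n (L a)"
    and dec: "\<And>j. 1 \<le> j \<Longrightarrow> j < n \<Longrightarrow> L a (Suc j) \<le> L a j"
    and w: "w permutes {1..n}" and des: "Des_perm n w \<subseteq> SD n (L a)"
  shows "lead_term (pibar_w n w (mon a :: 'a::field mpoly)) = act w (mon a)"
proof -
  define H where "H = (\<Sum>m\<in>Poly_Mapping.keys a. L a m)"
  have aH: "\<forall>m. L a m \<le> H"
  proof
    fix m show "L a m \<le> H"
    proof (cases "m \<in> Poly_Mapping.keys a")
      case True then show ?thesis unfolding H_def by (intro member_le_sum) auto
    next
      case False then show ?thesis by (simp add: in_keys_iff)
    qed
  qed
  define ws where "ws = (SOME ws. reduced_word n w ws)"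
  have red: "reduced_word n w ws" unfolding ws_def using exists_reduced[OF w] by (rule someI_ex)
  have inv: "INV n H a ws w TYPE('a)" by (rule main_induct[OF suppA aH dec red des])
  let ?f = "FW ws (mon a :: 'a mpoly)"
  let ?b = "push w a"
  have f1: "Poly_Mapping.lookup ?f ?b = 1"
    and f2: "\<forall>c\<in>Poly_Mapping.keys ?f. supp n (L c) \<and> hull n (VW ws (L a)) (L c)"
    and f3: "\<forall>x\<in>VW ws (L a). lelv n x (L ?b) \<and> (\<forall>m. x m \<le> H)"
    and f4: "\<forall>m. L ?b m \<le> H" and f5: "supp n (L ?b)"
    using inv unfolding INV_def by auto
  have "lead_term ?f = mon ?b"
  proof (rule lead_term_char[OF f1])
    fix c assume c: "c \<in> Poly_Mapping.keys ?f" "c \<noteq> ?b"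
    have "\<forall>j\<ge>1. Ssum n (L c) j \<le> Ssum n (L ?b) j"
    proof (intro allI impI)
      fix j :: nat assume j: "1 \<le> j"
      obtain x where x: "x \<in> VW ws (L a)" "Ssum n (L c) j \<le> Ssum n x j"
        using hull_Ssum[of n _ "L c" j] f2 c(1) j by blast
      have "Ssum n x j \<le> Ssum n (L ?b) j" using f3 x(1) f4 by (intro lelv_Ssum[of n x "L ?b" H]) auto
      then show "Ssum n (L c) j \<le> Ssum n (L ?b) j" using x by simp
    qed
    moreover have "L c \<noteq> L ?b" using c(2) poly_mapping_eqI by metis
    ultimately show "neglex_less c ?b"
      unfolding neglex_less_def using lex_from_Ssum f2 c(1) f5 by blast
  qed
  then show ?thesis by (simp add: pibar_w_FW ws_def[symmetric] act_mon)
qed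


lemma sum_list_pos: "xs \<noteq> [] \<Longrightarrow> \<forall>x\<in>set xs. (0::nat) < x \<Longrightarrow> 0 < sum_list xs"
  by (cases xs) auto

lemma comp_take_mono: assumes "\<forall>a\<in>set \<alpha>. (0::nat) < a" "j < j'" "j' \<le> length \<alpha>"
  shows "sum_list (take j \<alpha>) < sum_list (take j' \<alpha>)"
proof -
  have "take j' \<alpha> = take j \<alpha> @ take (j' - j) (drop j \<alpha>)"
    using take_add[of j "j' - j" \<alpha>] assms(2) by simp
  moreover have "0 < sum_list (take (j' - j) (drop j \<alpha>))"
  proof (rule sum_list_pos)
    show "take (j' - j) (drop j \<alpha>) \<noteq> []" using assms by simp
    show "\<forall>x\<in>set (take (j' - j) (drop j \<alpha>)). 0 < x"
      using assms(1) set_take_subset set_drop_subset by fastforce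
  qed
  ultimately show ?thesis by simp
qed

lemma comp_nonempty: "is_comp n \<alpha> \<Longrightarrow> 1 \<le> n \<Longrightarrow> \<alpha> \<noteq> []"
  by (auto simp: is_comp_def)

lemma Des_comp_props: assumes c: "is_comp n \<alpha>" and d: "d \<in> Des_comp \<alpha>"
  shows "hd \<alpha> \<le> d" "d < n"
proof -
  obtain j where j: "d = sum_list (take j \<alpha>)" "1 \<le> j" "j < length \<alpha>"
    using d by (auto simp: Des_comp_def)
  have pos: "\<forall>a\<in>set \<alpha>. 0 < a" and sn: "sum_list \<alpha> = n" using c by (auto simp: is_comp_def)
  have ne: "\<alpha> \<noteq> []" using j by auto
  have h1: "sum_list (take 1 \<alpha>) = hd \<alpha>" using ne by (cases \<alpha>) auto
  show "hd \<alpha> \<le> d"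
  proof (cases "j = 1")
    case True then show ?thesis using j h1 by simp
  next
    case False then have "sum_list (take 1 \<alpha>) < sum_list (take j \<alpha>)"
      using j pos by (intro comp_take_mono) auto
    then show ?thesis using j h1 by simp
  qed
  have "sum_list (take j \<alpha>) < sum_list (take (length \<alpha>) \<alpha>)"
    using j pos by (intro comp_take_mono) auto
  then show "d < n" using j sn by simp
qed

lemma Des_comp_image: "Des_comp \<alpha> = (\<lambda>j. sum_list (take j \<alpha>)) ` {1..<length \<alpha>}"
  by (auto simp: Des_comp_def)

lemma finite_Des_comp: "finite (Des_comp \<alpha>)"
  by (simp add: Des_comp_image)

lemma card_Des_comp: assumes c: "is_comp n \<alpha>" shows "card (Des_comp \<alpha>) = length \<alpha> - 1"
proof -
  have pos: "\<forall>a\<in>set \<alpha>. 0 < a" using c by (auto simp: is_comp_def)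
  have "inj_on (\<lambda>j. sum_list (take j \<alpha>)) {1..<length \<alpha>}"
  proof (rule inj_onI)
    fix x y assume x: "x \<in> {1..<length \<alpha>}" and y: "y \<in> {1..<length \<alpha>}"
      and eq: "sum_list (take x \<alpha>) = sum_list (take y \<alpha>)"
    show "x = y"
    proof (rule ccontr)
      assume "x \<noteq> y"
      then consider "x < y" | "y < x" by linarith
      then show False
      proof cases
        case 1 then show False using comp_take_mono[OF pos 1] y eq by simp
      next
        case 2 then show False using comp_take_mono[OF pos 2] x eq by simp
      qed
    qed
  qed
  then show ?thesis unfolding Des_comp_image by (simp add: card_image)
qed

lemma hd_in_Des: assumes "2 \<le> length \<alpha>" shows "hd \<alpha> \<in> Des_comp \<alpha>"
proof -
  have "\<alpha> \<noteq> []" using assms by auto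
  then have "sum_list (take 1 \<alpha>) = hd \<alpha>" by (cases \<alpha>) auto
  then show ?thesis unfolding Des_comp_def using assms by force
qed

lemma hd_single: "is_comp n \<alpha> \<Longrightarrow> length \<alpha> = 1 \<Longrightarrow> hd \<alpha> = n"
  by (cases \<alpha>) (auto simp: is_comp_def)

definition EXP :: "nat \<Rightarrow> nat set \<Rightarrow> (nat \<Rightarrow> int) \<Rightarrow> (nat \<Rightarrow>\<^sub>0 nat)" where
  "EXP n D i = (\<Sum>j\<in>D. \<Sum>m\<in>{1..j}. Poly_Mapping.single m 1) + (\<Sum>m\<in>{1..n}. Poly_Mapping.single m (nat (i m)))"

lemma xD_mon: "(xD n D i :: 'a::field mpoly) = mon (EXP n D i)"
proof -
  have X1: "(X m :: 'a mpoly) = mon (Poly_Mapping.single m 1)" for m by (simp add: X_def)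
  have "(\<Prod>j\<in>D. \<Prod>m\<in>{1..j}. (X m :: 'a mpoly)) = mon (\<Sum>j\<in>D. \<Sum>m\<in>{1..j}. Poly_Mapping.single m 1)"
    by (simp add: X1 prod_single)
  moreover have "(\<Prod>m\<in>{1..n}. (X m :: 'a mpoly) ^ nat (i m)) = mon (\<Sum>m\<in>{1..n}. Poly_Mapping.single m (nat (i m)))"
    by (simp add: X_pow prod_single)
  ultimately show ?thesis unfolding xD_def EXP_def by (simp add: mult_single)
qed

lemma lookup_EXP: assumes "finite D"
  shows "L (EXP n D i) m = card {j\<in>D. 1 \<le> m \<and> m \<le> j} + (if 1 \<le> m \<and> m \<le> n then nat (i m) else 0)"
proof -
  have a: "L (\<Sum>j\<in>D. \<Sum>m\<in>{1..j}. Poly_Mapping.single m 1) m = card {j\<in>D. 1 \<le> m \<and> m \<le> j}"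
  proof -
    have "L (\<Sum>j\<in>D. \<Sum>m\<in>{1..j}. Poly_Mapping.single m 1) m = (\<Sum>j\<in>D. if 1 \<le> m \<and> m \<le> j then 1 else 0)"
      unfolding lookup_sum lookup_single
      by (intro sum.cong refl) (auto simp: when_def)
    also have "\<dots> = card {j\<in>D. 1 \<le> m \<and> m \<le> j}" by (rule card_filter_sum[symmetric]) (rule assms)
    finally show ?thesis .
  qed
  have b: "L (\<Sum>m'\<in>{1..n}. Poly_Mapping.single m' (nat (i m'))) m = (if 1 \<le> m \<and> m \<le> n then nat (i m) else 0)"
    unfolding lookup_sum lookup_single by (auto simp: when_def)
  show ?thesis unfolding EXP_def lookup_add a b ..
qed


lemma inA_dec: assumes "in_A n k \<alpha> i" "1 \<le> j" "j < n" shows "i (Suc j) \<le> i j"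
proof -
  have d: "\<forall>j. 1 \<le> j \<and> j < n - k \<longrightarrow> i (Suc j) \<le> i j"
    and nn: "\<forall>j. 1 \<le> j \<and> j \<le> n \<longrightarrow> 0 \<le> i j"
    and z: "\<forall>j. n - k < j \<and> j \<le> n \<longrightarrow> i j = 0" using assms(1) by (auto simp: in_A_def)
  show ?thesis
  proof (cases "j < n - k")
    case True then show ?thesis using d assms by auto
  next
    case False
    then have "i (Suc j) = 0" using z assms by auto
    moreover have "0 \<le> i j" using nn assms by auto
    ultimately show ?thesis by simp
  qed
qed

lemma inA_nonneg: "in_A n k \<alpha> i \<Longrightarrow> 1 \<le> j \<Longrightarrow> j \<le> n \<Longrightarrow> 0 \<le> i j"
  by (auto simp: in_A_def)

lemma Des_seq_sub: assumes "in_A n k \<alpha> i" shows "Des_seq n i \<subseteq> {1..n-k}"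
proof
  fix j assume "j \<in> Des_seq n i"
  then have j: "1 \<le> j" "j < n" "i (Suc j) < i j" by (auto simp: Des_seq_def)
  have z: "\<forall>j. n - k < j \<and> j \<le> n \<longrightarrow> i j = 0" using assms by (auto simp: in_A_def)
  show "j \<in> {1..n-k}"
  proof (rule ccontr)
    assume "j \<notin> {1..n-k}"
    then have "n - k < j" using j by auto
    then have "i j = 0" "i (Suc j) = 0" using z j by auto
    then show False using j by simp
  qed
qed

lemma i_ge_des: assumes dec: "\<And>j. 1 \<le> j \<Longrightarrow> j < n \<Longrightarrow> i (Suc j) \<le> i j"
  and nn: "\<And>j. 1 \<le> j \<Longrightarrow> j \<le> n \<Longrightarrow> 0 \<le> i j"
  shows "1 \<le> m \<Longrightarrow> m \<le> n \<Longrightarrow> int (card {r\<in>Des_seq n i. m \<le> r}) \<le> i m"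
proof (induction "n - m" arbitrary: m)
  case 0
  then have "m = n" by simp
  then have e: "{r\<in>Des_seq n i. m \<le> r} = {}" by (auto simp: Des_seq_def)
  have "0 \<le> i m" using nn 0 \<open>m = n\<close> by simp
  then show ?case by (simp only: e card.empty of_nat_0)
next
  case (Suc d)
  have mn: "m < n" using Suc by simp
  have IH: "int (card {r\<in>Des_seq n i. Suc m \<le> r}) \<le> i (Suc m)"
    using Suc.hyps(1)[of "Suc m"] Suc.hyps(2) mn by simp
  have fin: "finite {r\<in>Des_seq n i. Suc m \<le> r}"
    by (rule finite_subset[of _ "{..<n}"]) (auto simp: Des_seq_def)
  have split: "{r\<in>Des_seq n i. m \<le> r} = (if m \<in> Des_seq n i then insert m {r\<in>Des_seq n i. Suc m \<le> r} else {r\<in>Des_seq n i. Suc m \<le> r})"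
    by (auto simp: le_eq_less_or_eq Suc_le_eq)
  show ?case
  proof (cases "m \<in> Des_seq n i")
    case True
    then have "i (Suc m) < i m" by (simp add: Des_seq_def)
    then show ?thesis using IH fin True unfolding split by simp
  next
    case False
    have "i (Suc m) \<le> i m" using dec Suc.prems mn by simp
    then show ?thesis using IH False unfolding split by simp
  qed
qed

lemma finite_Des_perm: "finite (Des_perm n w)"
  by (rule finite_subset[of _ "{..<n}"]) (auto simp: Des_perm_def)

lemma Des_perm_sub: "j \<in> Des_perm n w \<Longrightarrow> 1 \<le> j \<and> j < n"
  by (simp add: Des_perm_def)

lemma shift_rec: "shift_count n k w j = (if j \<in> Des_perm n w \<inter> {1..n-k} then 1 else 0) + shift_count n k w (Suc j)"
proof -
  let ?S = "Des_perm n w \<inter> {1..n-k}"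
  have fin: "finite {r\<in>?S. Suc j \<le> r}" by (rule finite_subset[of _ "{..<n}"]) (auto simp: Des_perm_def)
  have split: "{r\<in>?S. j \<le> r} = (if j \<in> ?S then insert j {r\<in>?S. Suc j \<le> r} else {r\<in>?S. Suc j \<le> r})"
    by (auto simp: le_eq_less_or_eq Suc_le_eq)
  show ?thesis unfolding shift_count_def split using fin by auto
qed

lemma shift_zero: "n - k < j \<Longrightarrow> shift_count n k w j = 0"
  unfolding shift_count_def by (auto intro: card_eq_0_iff[THEN iffD2])

lemma shift_nonneg: "0 \<le> shift_count n k w j" by (simp add: shift_count_def)

lemma shift_one: "shift_count n k w 1 = int (card (Des_perm n w \<inter> {1..n-k}))"
  unfolding shift_count_def by (rule arg_cong[where f="\<lambda>A. int (card A)"]) auto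

lemma DesEq: assumes A: "in_A n k \<alpha> i" and s1: "Des_comp \<alpha> \<subseteq> Des_perm n w"
  and s2: "Des_perm n w \<subseteq> Des_comp \<alpha> \<union> Des_seq n i"
  shows "Des_comp \<alpha> = Des_perm n w - {1..n-k}"
proof
  have c: "is_comp n \<alpha>" and h: "hd \<alpha> > n - k" using A by (auto simp: in_A_def)
  show "Des_comp \<alpha> \<subseteq> Des_perm n w - {1..n-k}"
  proof
    fix d assume d: "d \<in> Des_comp \<alpha>"
    have "hd \<alpha> \<le> d" by (rule Des_comp_props(1)[OF c d])
    then show "d \<in> Des_perm n w - {1..n-k}" using s1 d h by auto
  qed
  show "Des_perm n w - {1..n-k} \<subseteq> Des_comp \<alpha>"
    using s2 Des_seq_sub[OF A] by blast
qed


lemma lookup_EXP2: assumes "finite D" "\<forall>j\<in>D. j < n"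
  shows "L (EXP n D i) m = (if 1 \<le> m \<and> m \<le> n then card {j\<in>D. m \<le> j} + nat (i m) else 0)"
proof (cases "1 \<le> m \<and> m \<le> n")
  case True
  then have "{j\<in>D. 1 \<le> m \<and> m \<le> j} = {j\<in>D. m \<le> j}" by auto
  then show ?thesis using lookup_EXP[OF assms(1), of n i m] True by simp
next
  case False
  then have e: "{j\<in>D. 1 \<le> m \<and> m \<le> j} = {}" using assms(2) by fastforce
  have "L (EXP n D i) m = card {j\<in>D. 1 \<le> m \<and> m \<le> j} + (if 1 \<le> m \<and> m \<le> n then nat (i m) else 0)"
    by (rule lookup_EXP[OF assms(1)])
  also have "\<dots> = 0" unfolding e if_not_P[OF False] by simp
  finally show ?thesis unfolding if_not_P[OF False] .
qed

lemma partI: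
  assumes k: "1 \<le> k" "k \<le> n"
  and A: "in_A n k \<alpha> i" and w: "w permutes {1..n}"
  and s1: "Des_comp \<alpha> \<subseteq> Des_perm n w" and s2: "Des_perm n w \<subseteq> Des_comp \<alpha> \<union> Des_seq n i"
  and rel: "\<forall>j\<in>{1..n}. i' j = i j - shift_count n k w j"
  shows "lead_term (pibar_w n w (x_alpha n \<alpha> i :: 'a::field mpoly)) = act w (x_alpha n \<alpha> i)"
    "act w (x_alpha n \<alpha> i :: 'a mpoly) = gs n w i'"
    "GS_index n k w i'"
    "(gs n w i' :: 'a mpoly) \<in> GS n k"
proof -
  let ?Da = "Des_comp \<alpha>" and ?Dw = "Des_perm n w"
  have c: "is_comp n \<alpha>" and hA: "hd \<alpha> > n - k" and i1: "i 1 \<le> int k - int (length \<alpha>)"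
    using A by (auto simp: in_A_def)
  have deq: "?Da = ?Dw - {1..n-k}" by (rule DesEq[OF A s1 s2])
  have finDa: "finite ?Da" by (rule finite_Des_comp)
  have finDw: "finite ?Dw" by (rule finite_Des_perm)
  have Dalt: "\<forall>j\<in>?Da. j < n" using Des_comp_props(2)[OF c] by blast
  have Dwlt: "\<forall>j\<in>?Dw. j < n" by (simp add: Des_perm_def)
  let ?a = "EXP n ?Da i"
  have xa: "(x_alpha n \<alpha> i :: 'a mpoly) = mon ?a" by (simp add: x_alpha_def xD_mon)
  have la: "L ?a m = (if 1 \<le> m \<and> m \<le> n then card {j\<in>?Da. m \<le> j} + nat (i m) else 0)" for m
    by (rule lookup_EXP2[OF finDa Dalt])
  have Dsub: "?Dw \<inter> {1..n-k} \<subseteq> Des_seq n i" using s2 deq by blast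
  have ige: "shift_count n k w m \<le> i m" if m: "1 \<le> m" "m \<le> n" for m
  proof -
    have "card {r\<in>?Dw \<inter> {1..n-k}. m \<le> r} \<le> card {r\<in>Des_seq n i. m \<le> r}"
      by (rule card_mono) (use Dsub in \<open>auto intro: finite_subset[of _ "{..<n}"] simp: Des_seq_def\<close>)
    moreover have "int (card {r\<in>Des_seq n i. m \<le> r}) \<le> i m"
      by (rule i_ge_des) (use inA_dec[OF A] inA_nonneg[OF A] m in auto)
    ultimately show ?thesis unfolding shift_count_def by linarith
  qed
  have suppA: "supp n (L ?a)" unfolding supp_def la by auto
  have decA: "L ?a (Suc j) \<le> L ?a j" if "1 \<le> j" "j < n" for j
  proof -
    have "card {d\<in>?Da. Suc j \<le> d} \<le> card {d\<in>?Da. j \<le> d}" by (rule card_mono) (use finDa in auto)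
    moreover have "i (Suc j) \<le> i j" by (rule inA_dec[OF A that])
    ultimately show ?thesis unfolding la using that by auto
  qed
  have desSD: "?Dw \<subseteq> SD n (L ?a)"
  proof
    fix r assume r: "r \<in> ?Dw"
    have r1: "1 \<le> r" "r < n" using r by (simp_all add: Des_perm_def)
    have split: "{d\<in>?Da. r \<le> d} = (if r \<in> ?Da then insert r {d\<in>?Da. Suc r \<le> d} else {d\<in>?Da. Suc r \<le> d})"
      by (auto simp: le_eq_less_or_eq Suc_le_eq)
    have finr: "finite {d\<in>?Da. Suc r \<le> d}" using finDa by simp
    have "L ?a (Suc r) < L ?a r"
    proof (cases "r \<in> ?Da")
      case True
      have "card {d\<in>?Da. r \<le> d} = Suc (card {d\<in>?Da. Suc r \<le> d})" unfolding split using True finr by simp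
      moreover have "i (Suc r) \<le> i r" by (rule inA_dec[OF A r1])
      ultimately show ?thesis unfolding la using r1 by auto
    next
      case False
      then have "r \<in> Des_seq n i" using s2 r by blast
      then have "i (Suc r) < i r" by (simp add: Des_seq_def)
      moreover have "0 \<le> i (Suc r)" using inA_nonneg[OF A, of "Suc r"] r1 by simp
      moreover have "card {d\<in>?Da. Suc r \<le> d} \<le> card {d\<in>?Da. r \<le> d}" by (rule card_mono) (use finDa in auto)
      ultimately show ?thesis unfolding la using r1 by auto
    qed
    then show "r \<in> SD n (L ?a)" using r1 by (simp add: SD_def)
  qed
  show "lead_term (pibar_w n w (x_alpha n \<alpha> i :: 'a::field mpoly)) = act w (x_alpha n \<alpha> i)"
    unfolding xa by (rule lead_main[OF suppA decA w desSD])
  have eqE: "?a = EXP n ?Dw i'"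
  proof (rule poly_mapping_eqI)
    fix m
    show "L ?a m = L (EXP n ?Dw i') m"
    proof (cases "1 \<le> m \<and> m \<le> n")
      case False then show ?thesis by (simp only: la lookup_EXP2[OF finDw Dwlt] if_not_P[OF False] if_False)
    next
      case True
      let ?S = "{r\<in>?Dw \<inter> {1..n-k}. m \<le> r}"
      have un: "{j\<in>?Dw. m \<le> j} = {j\<in>?Da. m \<le> j} \<union> ?S" using deq by auto
      have dj: "{j\<in>?Da. m \<le> j} \<inter> ?S = {}" using deq by auto
      have cw: "card {j\<in>?Dw. m \<le> j} = card {j\<in>?Da. m \<le> j} + card ?S"
        unfolding un by (rule card_Un_disjoint) (use finDa finDw dj in auto)
      have im: "i' m = i m - int (card ?S)" using rel True by (simp add: shift_count_def)
      have "int (card ?S) \<le> i m" using ige[of m] True by (simp add: shift_count_def)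
      then have "nat (i m) = nat (i' m) + card ?S" using im by linarith
      then show ?thesis unfolding la lookup_EXP2[OF finDw Dwlt] using True cw by simp
    qed
  qed
  show "act w (x_alpha n \<alpha> i :: 'a mpoly) = gs n w i'"
    unfolding xa gs_def xD_mon eqE ..
  have n1: "1 \<le> n" using k by simp
  have cardDw: "card ?Dw = card (?Dw \<inter> {1..n-k}) + card ?Da"
    unfolding deq by (rule card_Int_Diff[OF finDw])
  have lenA: "length \<alpha> = card ?Da + 1"
    using card_Des_comp[OF c] comp_nonempty[OF c n1] by (cases \<alpha>) auto
  have g1: "i' 1 < int k - int (des_perm n w)"
  proof -
    have "i' 1 = i 1 - int (card (?Dw \<inter> {1..n-k}))" using rel n1 shift_one[of n k w] by simp
    then show ?thesis using i1 lenA cardDw unfolding des_perm_def by linarith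
  qed
  have g2: "\<forall>j. 1 \<le> j \<and> j < n - k \<longrightarrow> i' (Suc j) \<le> i' j"
  proof (intro allI impI)
    fix j assume j: "1 \<le> j \<and> j < n - k"
    have rj: "i' j = i j - shift_count n k w j" "i' (Suc j) = i (Suc j) - shift_count n k w (Suc j)"
      using rel j by auto
    have sr: "shift_count n k w j = (if j \<in> ?Dw \<inter> {1..n-k} then 1 else 0) + shift_count n k w (Suc j)"
      by (rule shift_rec)
    show "i' (Suc j) \<le> i' j"
    proof (cases "j \<in> ?Dw \<inter> {1..n-k}")
      case True
      then have "j \<in> Des_seq n i" using Dsub by blast
      then have "i (Suc j) < i j" by (simp add: Des_seq_def)
      moreover have "shift_count n k w j = 1 + shift_count n k w (Suc j)"
        using sr by (simp only: if_P[OF True])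
      ultimately show ?thesis using rj by linarith
    next
      case False
      have "i (Suc j) \<le> i j" by (rule inA_dec[OF A]) (use j in auto)
      moreover have "shift_count n k w j = shift_count n k w (Suc j)"
        using sr by (simp only: if_not_P[OF False] add_0)
      ultimately show ?thesis using rj by linarith
    qed
  qed
  have g3: "\<forall>j. 1 \<le> j \<and> j \<le> n \<longrightarrow> 0 \<le> i' j" using rel ige by auto
  have g4: "\<forall>j. n - k < j \<and> j \<le> n \<longrightarrow> i' j = 0"
  proof (intro allI impI)
    fix j assume j: "n - k < j \<and> j \<le> n"
    then have "i j = 0" using A by (auto simp: in_A_def)
    moreover have "shift_count n k w j = 0" using j by (intro shift_zero) simp
    moreover have "1 \<le> j" using j by simp
    ultimately show "i' j = 0" using rel j by simp
  qed
  show gi: "GS_index n k w i'" unfolding GS_index_def using w g1 g2 g3 g4 by blast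
  show "(gs n w i' :: 'a mpoly) \<in> GS n k" unfolding GS_def using gi by blast
qed


lemma mon_inj: "(mon e1 :: 'a::field mpoly) = mon e2 \<Longrightarrow> e1 = e2"
proof -
  assume h: "(mon e1 :: 'a::field mpoly) = mon e2"
  have "Poly_Mapping.lookup (mon e1 :: 'a mpoly) e1 = Poly_Mapping.lookup (mon e2 :: 'a mpoly) e1" using h by simp
  then show "e1 = e2" by (simp add: lookup_single when_def split: if_splits)
qed

lemma push_inj: assumes w: "w permutes S" and h: "push w e1 = push w e2" shows "e1 = e2"
proof (rule poly_mapping_eqI)
  fix j
  have "L (push w e1) (w j) = L (push w e2) (w j)" using h by simp
  then show "L e1 j = L e2 j" using lookup_push_perm[OF w] permutes_inverses(2)[OF w] by simp
qed

lemma gs_inj: assumes g1: "GS_index n k w i1" and g2: "GS_index n k w i2"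
  and eq: "(gs n w i1 :: 'a::field mpoly) = gs n w i2"
  shows "\<forall>j\<in>{1..n}. i1 j = i2 j"
proof
  fix j assume j: "j \<in> {1..n}"
  have w: "w permutes {1..n}" using g1 by (simp add: GS_index_def)
  have "(mon (push w (EXP n (Des_perm n w) i1)) :: 'a mpoly) = mon (push w (EXP n (Des_perm n w) i2))"
    using eq unfolding gs_def xD_mon act_mon .
  then have "EXP n (Des_perm n w) i1 = EXP n (Des_perm n w) i2" by (rule push_inj[OF w, OF mon_inj])
  then have eqL: "L (EXP n (Des_perm n w) i1) j = L (EXP n (Des_perm n w) i2) j" by simp
  have Dwlt: "\<forall>j\<in>Des_perm n w. j < n" by (simp add: Des_perm_def)
  have cj: "1 \<le> j \<and> j \<le> n" using j by simp
  have "card {j'\<in>Des_perm n w. j \<le> j'} + nat (i1 j) = card {j'\<in>Des_perm n w. j \<le> j'} + nat (i2 j)"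
    using eqL unfolding lookup_EXP2[OF finite_Des_perm Dwlt] if_P[OF cj] .
  then have "nat (i1 j) = nat (i2 j)" by simp
  moreover have "0 \<le> i1 j" "0 \<le> i2 j" using g1 g2 j by (auto simp: GS_index_def)
  ultimately show "i1 j = i2 j" by simp
qed

lemma partII_rev:
  assumes k: "1 \<le> k" "k \<le> n"
  and g: "GS_index n k w i'" and c: "is_comp n \<alpha>"
  and deq: "Des_comp \<alpha> = Des_perm n w - {1..n-k}"
  and rel: "\<forall>j\<in>{1..n}. i' j = i j - shift_count n k w j"
  shows "in_A n k \<alpha> i" "Des_perm n w \<subseteq> Des_comp \<alpha> \<union> Des_seq n i"
proof -
  let ?Da = "Des_comp \<alpha>" and ?Dw = "Des_perm n w"
  have w: "w permutes {1..n}" and gi1: "i' 1 < int k - int (des_perm n w)"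
    and gdec: "\<forall>j. 1 \<le> j \<and> j < n - k \<longrightarrow> i' (Suc j) \<le> i' j"
    and gnn: "\<forall>j. 1 \<le> j \<and> j \<le> n \<longrightarrow> 0 \<le> i' j"
    and gz: "\<forall>j. n - k < j \<and> j \<le> n \<longrightarrow> i' j = 0" using g by (auto simp: GS_index_def)
  have n1: "1 \<le> n" using k by simp
  have ne: "\<alpha> \<noteq> []" by (rule comp_nonempty[OF c n1])
  have ri: "i j = i' j + shift_count n k w j" if "j \<in> {1..n}" for j using rel that by auto
  have hd: "hd \<alpha> > n - k"
  proof (cases "length \<alpha> = 1")
    case True then show ?thesis using hd_single[OF c] k by simp
  next
    case False
    then have "2 \<le> length \<alpha>" using ne by (cases \<alpha>) (auto simp: Suc_le_eq)
    then have "hd \<alpha> \<in> ?Da" by (rule hd_in_Des)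
    then show ?thesis unfolding deq by (auto simp: Des_perm_def)
  qed
  have finDw: "finite ?Dw" by (rule finite_Des_perm)
  have cardDw: "card ?Dw = card (?Dw \<inter> {1..n-k}) + card ?Da"
    unfolding deq by (rule card_Int_Diff[OF finDw])
  have lenA: "length \<alpha> = card ?Da + 1"
    using card_Des_comp[OF c] ne by (cases \<alpha>) auto
  have i1: "i 1 \<le> int k - int (length \<alpha>)"
  proof -
    have "i 1 = i' 1 + int (card (?Dw \<inter> {1..n-k}))" using ri[of 1] n1 shift_one[of n k w] by simp
    then show ?thesis using gi1 lenA cardDw unfolding des_perm_def by linarith
  qed
  have shmono: "shift_count n k w (Suc j) \<le> shift_count n k w j" for j
    using shift_rec[of n k w j] by simp
  have idec: "\<forall>j. 1 \<le> j \<and> j < n - k \<longrightarrow> i (Suc j) \<le> i j"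
  proof (intro allI impI)
    fix j assume j: "1 \<le> j \<and> j < n - k"
    then show "i (Suc j) \<le> i j" using ri[of j] ri[of "Suc j"] gdec shmono[of j] by auto
  qed
  have inn: "\<forall>j. 1 \<le> j \<and> j \<le> n \<longrightarrow> 0 \<le> i j"
  proof (intro allI impI)
    fix j :: nat assume j: "1 \<le> j \<and> j \<le> n"
    then have "i j = i' j + shift_count n k w j" by (intro ri) simp
    moreover have "0 \<le> i' j" using gnn j by blast
    moreover have "0 \<le> shift_count n k w j" by (rule shift_nonneg)
    ultimately show "0 \<le> i j" by simp
  qed
  have iz: "\<forall>j. n - k < j \<and> j \<le> n \<longrightarrow> i j = 0"
  proof (intro allI impI)
    fix j assume j: "n - k < j \<and> j \<le> n"
    then have "1 \<le> j" by simp
    then show "i j = 0" using ri[of j] gz shift_zero[of n k j w] j by simp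
  qed
  show "in_A n k \<alpha> i" unfolding in_A_def using c hd i1 idec inn iz by blast
  show "?Dw \<subseteq> ?Da \<union> Des_seq n i"
  proof
    fix r assume r: "r \<in> ?Dw"
    have r1: "1 \<le> r" "r < n" using r by (simp_all add: Des_perm_def)
    show "r \<in> ?Da \<union> Des_seq n i"
    proof (cases "r \<in> {1..n-k}")
      case False then show ?thesis using r deq by blast
    next
      case True
      have sr: "shift_count n k w r = 1 + shift_count n k w (Suc r)"
        using shift_rec[of n k w r] r True by simp
      have "i' (Suc r) \<le> i' r"
      proof (cases "r < n - k")
        case True then show ?thesis using gdec r1 by simp
      next
        case False
        then have "i' (Suc r) = 0" using gz \<open>r \<in> {1..n-k}\<close> r1 by auto
        then show ?thesis using gnn r1 by simp
      qed
      then have "i (Suc r) < i r" using ri[of r] ri[of "Suc r"] r1 sr by simp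
      then show ?thesis using r1 by (simp add: Des_seq_def)
    qed
  qed
qed

theorem mainTheorem14:
  fixes n k :: nat
  assumes "1 \<le> k" and "k \<le> n"
  shows
   "(\<forall>(\<alpha>::nat list) (i::nat \<Rightarrow> int) (w::nat \<Rightarrow> nat) (i'::nat \<Rightarrow> int).
       in_A n k \<alpha> i \<longrightarrow> w permutes {1..n} \<longrightarrow>
       Des_comp \<alpha> \<subseteq> Des_perm n w \<longrightarrow> Des_perm n w \<subseteq> Des_comp \<alpha> \<union> Des_seq n i \<longrightarrow>
       (\<forall>j\<in>{1..n}. i' j = i j - shift_count n k w j) \<longrightarrow>
       lead_term (pibar_w n w (x_alpha n \<alpha> i :: 'a::field mpoly)) = act w (x_alpha n \<alpha> i)
       \<and> act w (x_alpha n \<alpha> i :: 'a mpoly) = gs n w i'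
       \<and> GS_index n k w i' \<and> (gs n w i' :: 'a mpoly) \<in> GS n k)
    \<and>
    (\<forall>(w::nat \<Rightarrow> nat) (i'::nat \<Rightarrow> int). GS_index n k w i' \<longrightarrow>
       (\<forall>(\<alpha>::nat list) (i::nat \<Rightarrow> int). is_comp n \<alpha> \<longrightarrow>
         ((in_A n k \<alpha> i \<and> Des_comp \<alpha> \<subseteq> Des_perm n w \<and>
           Des_perm n w \<subseteq> Des_comp \<alpha> \<union> Des_seq n i \<and>
           lead_term (pibar_w n w (x_alpha n \<alpha> i :: 'a mpoly)) = gs n w i')
          \<longleftrightarrow>
          (Des_comp \<alpha> = Des_perm n w - {1..n-k} \<and>
           (\<forall>j\<in>{1..n}. i' j = i j - shift_count n k w j)))))"
proof (intro conjI allI impI)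
  fix \<alpha> i w i'
  assume A: "in_A n k \<alpha> i" and w: "w permutes {1..n}" and s1: "Des_comp \<alpha> \<subseteq> Des_perm n w"
    and s2: "Des_perm n w \<subseteq> Des_comp \<alpha> \<union> Des_seq n i"
    and rel: "\<forall>j\<in>{1..n}. i' j = i j - shift_count n k w j"
  note P = partI[OF assms A w s1 s2 rel]
  show "lead_term (pibar_w n w (x_alpha n \<alpha> i :: 'a::field mpoly)) = act w (x_alpha n \<alpha> i)" by (rule P(1))
  show "act w (x_alpha n \<alpha> i :: 'a mpoly) = gs n w i'" by (rule P(2))
  show "GS_index n k w i'" by (rule P(3))
  show "(gs n w i' :: 'a mpoly) \<in> GS n k" by (rule P(4))
next
  fix w i' \<alpha> i
  assume g: "GS_index n k w i'" and c: "is_comp n \<alpha>"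
  have w: "w permutes {1..n}" using g by (simp add: GS_index_def)
  show "(in_A n k \<alpha> i \<and> Des_comp \<alpha> \<subseteq> Des_perm n w \<and>
           Des_perm n w \<subseteq> Des_comp \<alpha> \<union> Des_seq n i \<and>
           lead_term (pibar_w n w (x_alpha n \<alpha> i :: 'a mpoly)) = gs n w i')
          \<longleftrightarrow>
          (Des_comp \<alpha> = Des_perm n w - {1..n-k} \<and>
           (\<forall>j\<in>{1..n}. i' j = i j - shift_count n k w j))"
  proof
    assume h: "in_A n k \<alpha> i \<and> Des_comp \<alpha> \<subseteq> Des_perm n w \<and>
           Des_perm n w \<subseteq> Des_comp \<alpha> \<union> Des_seq n i \<and>
           lead_term (pibar_w n w (x_alpha n \<alpha> i :: 'a mpoly)) = gs n w i'"
    then have A: "in_A n k \<alpha> i" and s1: "Des_comp \<alpha> \<subseteq> Des_perm n w"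
      and s2: "Des_perm n w \<subseteq> Des_comp \<alpha> \<union> Des_seq n i"
      and ld: "lead_term (pibar_w n w (x_alpha n \<alpha> i :: 'a mpoly)) = gs n w i'" by auto
    define i'' where "i'' j = i j - shift_count n k w j" for j
    have rel'': "\<forall>j\<in>{1..n}. i'' j = i j - shift_count n k w j" by (simp add: i''_def)
    note P = partI[OF assms A w s1 s2 rel'']
    have e1: "lead_term (pibar_w n w (x_alpha n \<alpha> i :: 'a mpoly)) = act w (x_alpha n \<alpha> i)" by (rule P(1))
    have e2: "act w (x_alpha n \<alpha> i :: 'a mpoly) = gs n w i''" by (rule P(2))
    have "(gs n w i' :: 'a mpoly) = gs n w i''" using ld e1 e2 by simp
    then have "\<forall>j\<in>{1..n}. i' j = i'' j" by (rule gs_inj[OF g P(3)])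
    then show "Des_comp \<alpha> = Des_perm n w - {1..n-k} \<and> (\<forall>j\<in>{1..n}. i' j = i j - shift_count n k w j)"
      using DesEq[OF A s1 s2] by (simp add: i''_def)
  next
    assume h: "Des_comp \<alpha> = Des_perm n w - {1..n-k} \<and> (\<forall>j\<in>{1..n}. i' j = i j - shift_count n k w j)"
    then have deq: "Des_comp \<alpha> = Des_perm n w - {1..n-k}"
      and rel: "\<forall>j\<in>{1..n}. i' j = i j - shift_count n k w j" by auto
    have A: "in_A n k \<alpha> i" and s2: "Des_perm n w \<subseteq> Des_comp \<alpha> \<union> Des_seq n i"
      using partII_rev[OF assms g c deq rel] by auto
    have s1: "Des_comp \<alpha> \<subseteq> Des_perm n w" using deq by blast
    note P = partI[OF assms A w s1 s2 rel]
    show "in_A n k \<alpha> i \<and> Des_comp \<alpha> \<subseteq> Des_perm n w \<and>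
           Des_perm n w \<subseteq> Des_comp \<alpha> \<union> Des_seq n i \<and>
           lead_term (pibar_w n w (x_alpha n \<alpha> i :: 'a mpoly)) = gs n w i'"
    proof -
      have e1: "lead_term (pibar_w n w (x_alpha n \<alpha> i :: 'a mpoly)) = act w (x_alpha n \<alpha> i)" by (rule P(1))
      have e2: "act w (x_alpha n \<alpha> i :: 'a mpoly) = gs n w i'" by (rule P(2))
      show ?thesis using A s1 s2 e1 e2 by simp
    qed
  qed
qed


end
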